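(* Let $X$ be a $K$-convex Banach space, let $p\in(1,\infty)$, and let $\alpha\in(0,1]$ be such that $$\sup_{n\ge 1}\ \sup_{z\in A_\alpha}\big\|e^{-z\Delta}\big\|_{L^p(\Omega_n;X)\to L^p(\Omega_n;X)}<\infty,\qquad A_\alpha:=\{z\in\mathbb{C}: |\arg z|\le \tfrac{\alpha\pi}{2}\}.$$ Then there is a constant $c(p,X)>0$ such that for all $n$, all $d<n$ and every $f\in\mathcal{T}_d(X)$, $$\|\Delta f\|_{L^p(\Omega_n;X)}\ge c(p,X)\, d^{\alpha}\,\|f\|_{L^p(\Omega_n;X)}.$$
   Context: $\Omega_n=\{-1,1\}^n$ is the Hamming cube with the uniform probability measure, and $L^p(\Omega_n;X)$ is the Bochner space of $X$-valued functions on it. Every $f:\Omega_n\to X$ has the Walsh expansion $f=\sum_{S\subseteq\{1,\dots,n\}}\hat f(S)\varepsilon^S$ with $\hat f(S)\in X$ and $\varepsilon^S=\prod_{i\in S}\varepsilon_i$. The operator $\Delta$ acts by $\Delta f=\sum_S |S|\hat f(S)\varepsilon^S$, and $e^{-z\Delta}f=\sum_S e^{-z|S|}\hat f(S)\varepsilon^S$ for $z\in\mathbb{C}$. The tail space is $\mathcal{T}_d(X)=\{f:\ \hat f(S)=0 \text{ whenever } |S|\le d\}$. (By a theorem of Pisier, for $K$-convex $X$ and $p\in(1,\infty)$ such an $\alpha$ exists.) *)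

theory Defs
  imports "HOL-Analysis.Analysis"
begin

text \<open>Points of the Hamming cube {-1,1}^n are encoded as subsets A of {..<n}:
  A is the set of coordinates i with epsilon_i = -1.  Functions on the cube are
  functions f :: nat set => 'a (only values on Pow {..<n} matter).\<close>

definition walsh :: "nat set \<Rightarrow> nat set \<Rightarrow> real" where
  "walsh S A = (-1) ^ card (S \<inter> A)"

definition fourier :: "nat \<Rightarrow> (nat set \<Rightarrow> 'a::real_vector) \<Rightarrow> nat set \<Rightarrow> 'a" where
  "fourier n f S = (1 / 2 ^ n) *\<^sub>R (\<Sum>A\<in>Pow {..<n}. walsh S A *\<^sub>R f A)"

definition lpnorm :: "real \<Rightarrow> nat \<Rightarrow> (nat set \<Rightarrow> 'a::real_normed_vector) \<Rightarrow> real" where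
  "lpnorm p n f = ((\<Sum>A\<in>Pow {..<n}. norm (f A) powr p) / 2 ^ n) powr (1 / p)"

definition hDelta :: "nat \<Rightarrow> (nat set \<Rightarrow> 'a::real_vector) \<Rightarrow> nat set \<Rightarrow> 'a" where
  "hDelta n f = (\<lambda>A. \<Sum>S\<in>Pow {..<n}. (real (card S) * walsh S A) *\<^sub>R fourier n f S)"

definition rad :: "nat \<Rightarrow> (nat set \<Rightarrow> 'a::real_vector) \<Rightarrow> nat set \<Rightarrow> 'a" where
  "rad n f = (\<lambda>A. \<Sum>i<n. walsh {i} A *\<^sub>R fourier n f {i})"

definition K_convex :: "'a::real_normed_vector itself \<Rightarrow> bool" where
  "K_convex _ \<longleftrightarrow> (\<exists>C. \<forall>n (f :: nat set \<Rightarrow> 'a). lpnorm 2 n (rad n f) \<le> C * lpnorm 2 n f)"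

text \<open>A complex Banach space is encoded as a real Banach space together with a
  complex structure J (multiplication by i) compatible with the norm.\<close>
definition complex_structure :: "('a::real_normed_vector \<Rightarrow> 'a) \<Rightarrow> bool" where
  "complex_structure J \<longleftrightarrow> linear J \<and> (\<forall>x. J (J x) = - x) \<and>
     (\<forall>t x. norm (cos t *\<^sub>R x + sin t *\<^sub>R J x) = norm x)"

definition cmult :: "('a::real_vector \<Rightarrow> 'a) \<Rightarrow> complex \<Rightarrow> 'a \<Rightarrow> 'a" where
  "cmult J c x = Re c *\<^sub>R x + Im c *\<^sub>R J x"

definition heat :: "('a::real_vector \<Rightarrow> 'a) \<Rightarrow> nat \<Rightarrow> complex \<Rightarrow> (nat set \<Rightarrow> 'a) \<Rightarrow> nat set \<Rightarrow> 'a" where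
  "heat J n z f = (\<lambda>A. \<Sum>S\<in>Pow {..<n}.
      cmult J (exp (- z * of_nat (card S))) (walsh S A *\<^sub>R fourier n f S))"

definition sector :: "real \<Rightarrow> complex set" where
  "sector \<alpha> = {z. \<bar>Arg z\<bar> \<le> \<alpha> * pi / 2}"

definition tail_space :: "nat \<Rightarrow> nat \<Rightarrow> (nat set \<Rightarrow> 'a::real_vector) \<Rightarrow> bool" where
  "tail_space n d f \<longleftrightarrow> (\<forall>S\<subseteq>{..<n}. card S \<le> d \<longrightarrow> fourier n f S = 0)"

end

theory Submission
  imports Defs "HOL-Complex_Analysis.Complex_Analysis"
begin


lemma walsh_sym: "walsh S A = walsh A S"
  by (simp add: walsh_def Int_commute)

lemma walsh_sq: "walsh S A * walsh S A = 1"
  by (simp add: walsh_def flip: power_add)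

lemma abs_walsh [simp]: "\<bar>walsh S A\<bar> = 1"
  by (simp add: walsh_def)

lemma walsh_sum_zero:
  assumes "finite N" "i \<in> U" "U \<subseteq> N"
  shows "(\<Sum>A\<in>Pow N. walsh U A) = 0"
proof -
  define N' where "N' = N - {i}"
  have N: "N = insert i N'" "i \<notin> N'" "finite N'" using assms by (auto simp: N'_def)
  have disj: "Pow N' \<inter> insert i ` Pow N' = {}" using N(2) by auto
  have inj: "inj_on (insert i) (Pow N')" using N(2) unfolding inj_on_def by (metis PowD insert_ident subsetD)
  have "(\<Sum>A\<in>Pow N. walsh U A) = (\<Sum>A\<in>Pow N'. walsh U A) + (\<Sum>A\<in>insert i ` Pow N'. walsh U A)"
    unfolding N(1) Pow_insert using disj N(3) by (simp add: sum.union_disjoint)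
  also have "(\<Sum>A\<in>insert i ` Pow N'. walsh U A) = (\<Sum>A\<in>Pow N'. walsh U (insert i A))"
    using inj by (simp add: sum.reindex)
  also have "\<dots> = (\<Sum>A\<in>Pow N'. - walsh U A)"
  proof (rule sum.cong[OF refl])
    fix A assume "A \<in> Pow N'"
    then have "i \<notin> A" using N(2) by auto
    then have "U \<inter> insert i A = insert i (U \<inter> A)" "i \<notin> U \<inter> A" using assms(2) by auto
    moreover have "finite (U \<inter> A)" using \<open>A \<in> Pow N'\<close> N(3) finite_subset by blast
    ultimately show "walsh U (insert i A) = - walsh U A"
      by (simp add: walsh_def)
  qed
  finally show ?thesis by (simp add: sum_negf)
qed

lemma card_symdiff_parity:
  assumes "finite S" "finite T"
  shows "card (S \<inter> A) + card (T \<inter> A) = card (((S - T) \<union> (T - S)) \<inter> A) + 2 * card (S \<inter> T \<inter> A)"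
proof -
  have f: "finite (S \<inter> A)" "finite (T \<inter> A)" using assms by auto
  have "card (S \<inter> A) = card ((S - T) \<inter> A) + card (S \<inter> T \<inter> A)"
    using assms by (subst card_Un_disjoint[symmetric]) (auto intro: arg_cong[where f=card])
  moreover have "card (T \<inter> A) = card ((T - S) \<inter> A) + card (S \<inter> T \<inter> A)"
    using assms by (subst card_Un_disjoint[symmetric]) (auto intro: arg_cong[where f=card])
  moreover have "card (((S - T) \<union> (T - S)) \<inter> A) = card ((S - T) \<inter> A) + card ((T - S) \<inter> A)"
    using assms by (subst card_Un_disjoint[symmetric]) (auto intro: arg_cong[where f=card])
  ultimately show ?thesis by simp
qed

lemma walsh_mult:
  assumes "finite S" "finite T"
  shows "walsh S A * walsh T A = walsh ((S - T) \<union> (T - S)) A"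
  unfolding walsh_def
  by (simp add: power_add[symmetric] card_symdiff_parity[OF assms] power_add power_mult)

lemma walsh_orth:
  assumes "S \<subseteq> {..<n}" "T \<subseteq> {..<n}"
  shows "(\<Sum>A\<in>Pow {..<n}. walsh S A * walsh T A) = (if S = T then 2 ^ n else 0)"
proof (cases "S = T")
  case True
  then show ?thesis by (simp add: walsh_sq card_Pow)
next
  case False
  have fin: "finite S" "finite T" using assms finite_subset by blast+
  obtain i where i: "i \<in> (S - T) \<union> (T - S)" using False by blast
  have "(\<Sum>A\<in>Pow {..<n}. walsh S A * walsh T A) = (\<Sum>A\<in>Pow {..<n}. walsh ((S - T) \<union> (T - S)) A)"
    by (simp add: walsh_mult fin)
  also have "\<dots> = 0" by (rule walsh_sum_zero[OF _ i]) (use assms in auto)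
  finally show ?thesis using False by simp
qed

lemma fourier_inversion:
  fixes f :: "nat set \<Rightarrow> 'a::real_vector"
  assumes "A \<subseteq> {..<n}"
  shows "(\<Sum>S\<in>Pow {..<n}. walsh S A *\<^sub>R fourier n f S) = f A"
proof -
  have "(\<Sum>S\<in>Pow {..<n}. walsh S A *\<^sub>R fourier n f S)
      = (1 / 2 ^ n) *\<^sub>R (\<Sum>S\<in>Pow {..<n}. \<Sum>B\<in>Pow {..<n}. (walsh S A * walsh S B) *\<^sub>R f B)"
    by (simp add: fourier_def scaleR_sum_right)
  also have "(\<Sum>S\<in>Pow {..<n}. \<Sum>B\<in>Pow {..<n}. (walsh S A * walsh S B) *\<^sub>R f B)
      = (\<Sum>B\<in>Pow {..<n}. \<Sum>S\<in>Pow {..<n}. (walsh S A * walsh S B) *\<^sub>R f B)"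
    by (rule sum.swap)
  also have "\<dots> = (\<Sum>B\<in>Pow {..<n}. (\<Sum>S\<in>Pow {..<n}. walsh A S * walsh B S) *\<^sub>R f B)"
    by (simp add: scaleR_sum_left walsh_sym)
  also have "\<dots> = (\<Sum>B\<in>Pow {..<n}. (if A = B then 2 ^ n *\<^sub>R f B else 0))"
    by (intro sum.cong refl) (use assms in \<open>simp add: walsh_orth\<close>)
  also have "\<dots> = 2 ^ n *\<^sub>R f A" using assms by (simp add: sum.delta)
  finally show ?thesis by simp
qed

lemma fourier_hDelta:
  fixes f :: "nat set \<Rightarrow> 'a::real_vector"
  assumes "S \<subseteq> {..<n}"
  shows "fourier n (hDelta n f) S = real (card S) *\<^sub>R fourier n f S"
proof -
  have "fourier n (hDelta n f) S
      = (1 / 2 ^ n) *\<^sub>R (\<Sum>A\<in>Pow {..<n}. \<Sum>T\<in>Pow {..<n}. (walsh S A * (real (card T) * walsh T A)) *\<^sub>R fourier n f T)"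
    unfolding fourier_def[of n "hDelta n f" S] by (simp add: hDelta_def scaleR_sum_right mult.assoc)
  also have "(\<Sum>A\<in>Pow {..<n}. \<Sum>T\<in>Pow {..<n}. (walsh S A * (real (card T) * walsh T A)) *\<^sub>R fourier n f T)
     = (\<Sum>T\<in>Pow {..<n}. \<Sum>A\<in>Pow {..<n}. (walsh S A * (real (card T) * walsh T A)) *\<^sub>R fourier n f T)"
    by (rule sum.swap)
  also have "\<dots> = (\<Sum>T\<in>Pow {..<n}. (real (card T) * (\<Sum>A\<in>Pow {..<n}. walsh S A * walsh T A)) *\<^sub>R fourier n f T)"
    by (simp add: scaleR_sum_left sum_distrib_left mult.left_commute)
  also have "\<dots> = (\<Sum>T\<in>Pow {..<n}. (if S = T then (real (card T) * 2 ^ n) *\<^sub>R fourier n f T else 0))"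
    by (intro sum.cong refl) (use assms in \<open>simp add: walsh_orth\<close>)
  also have "\<dots> = (real (card S) * 2 ^ n) *\<^sub>R fourier n f S" using assms by (simp add: sum.delta)
  finally show ?thesis by simp
qed




section \<open>Hoelder duality for finite sums\<close>

lemma powr_mult_self: "(x::real) \<ge> 0 \<Longrightarrow> p > 1 \<Longrightarrow> x * x powr (p - 1) = x powr p"
proof (cases "x = 0")
  case False
  assume "x \<ge> 0" "p > 1"
  then have "x > 0" using False by simp
  then show ?thesis by (simp add: powr_diff)
qed simp

lemma holder_dual:
  fixes w :: "'i \<Rightarrow> real"
  assumes fin: "finite I" and p: "p > 1" and wpos: "\<And>i. i \<in> I \<Longrightarrow> w i \<ge> 0"
  shows "\<exists>y. (\<forall>i\<in>I. y i \<ge> 0) \<and> (\<Sum>i\<in>I. w i * y i) = (\<Sum>i\<in>I. w i powr p) powr (1/p) \<and>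
           (\<forall>v. (\<forall>i\<in>I. v i \<ge> 0) \<longrightarrow> (\<Sum>i\<in>I. v i * y i) \<le> (\<Sum>i\<in>I. v i powr p) powr (1/p))"
proof (cases "(\<Sum>i\<in>I. w i powr p) = 0")
  case True
  then have "\<forall>i\<in>I. w i powr p = 0" using sum_nonneg_eq_0_iff[OF fin, of "\<lambda>i. w i powr p"] by auto
  then have w0: "\<forall>i\<in>I. w i = 0" by simp
  show ?thesis
    by (rule exI[of _ "\<lambda>i. 0"]) (use True w0 in auto)
next
  case False
  define Sw where "Sw = (\<Sum>i\<in>I. w i powr p)"
  have Sw: "Sw > 0" using False wpos unfolding Sw_def by (simp add: order_less_le sum_nonneg)
  define q where "q = p / (p - 1)"
  have q: "q > 1" "1/p + 1/q = 1" using p by (auto simp: q_def field_simps)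
  define y where "y i = w i powr (p - 1) / Sw powr ((p - 1) / p)" for i
  have ypos: "\<forall>i\<in>I. y i \<ge> 0" by (simp add: y_def)
  have "(\<Sum>i\<in>I. w i * y i) = (\<Sum>i\<in>I. w i powr p) / Sw powr ((p - 1) / p)"
    by (simp add: y_def sum_divide_distrib powr_mult_self wpos p mult.assoc[symmetric])
  also have "\<dots> = Sw powr (1/p)"
  proof -
    have "Sw powr 1 = Sw powr (1/p) * Sw powr ((p-1)/p)"
      by (simp add: powr_add[symmetric] add_divide_distrib[symmetric]) (use p in \<open>simp add: diff_divide_distrib\<close>)
    then show ?thesis using Sw by (simp add: Sw_def field_simps)
  qed
  finally have eq: "(\<Sum>i\<in>I. w i * y i) = (\<Sum>i\<in>I. w i powr p) powr (1/p)" by (simp add: Sw_def)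
  have yq: "(\<Sum>i\<in>I. y i powr q) = 1"
  proof -
    have "y i powr q = w i powr p / Sw" if "i \<in> I" for i
    proof -
      have "y i powr q = (w i powr (p-1)) powr q / (Sw powr ((p - 1) / p)) powr q"
        unfolding y_def by (rule powr_divide)
      also have "\<dots> = w i powr p / Sw"
        using p Sw by (simp add: powr_powr q_def)
      finally show ?thesis .
    qed
    then have "(\<Sum>i\<in>I. y i powr q) = (\<Sum>i\<in>I. w i powr p) / Sw" by (simp add: sum_divide_distrib)
    then show ?thesis using Sw by (simp add: Sw_def)
  qed
  have hold: "(\<Sum>i\<in>I. v i * y i) \<le> (\<Sum>i\<in>I. v i powr p) powr (1/p)" if vpos: "\<forall>i\<in>I. v i \<ge> 0" for v
  proof (cases "(\<Sum>i\<in>I. v i powr p) = 0")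
    case True
    then have "\<forall>i\<in>I. v i powr p = 0" using sum_nonneg_eq_0_iff[OF fin, of "\<lambda>i. v i powr p"] by auto
    then have "\<forall>i\<in>I. v i = 0" by simp
    then show ?thesis by simp
  next
    case False
    define Sv where "Sv = (\<Sum>i\<in>I. v i powr p)"
    have Sv: "Sv > 0" using False vpos unfolding Sv_def by (simp add: order_less_le sum_nonneg)
    define c where "c = Sv powr (1/p)"
    have c: "c > 0" using Sv by (simp add: c_def)
    have young: "(v i / c) * y i \<le> (v i / c) powr p / p + y i powr q / q" if "i \<in> I" for i
      by (rule Youngs_inequality) (use p q that vpos ypos c in auto)
    have vc: "(v i / c) powr p = v i powr p / Sv" if "i \<in> I" for i
    proof -
      have "(v i / c) powr p = v i powr p / c powr p" by (rule powr_divide)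
      also have "c powr p = Sv" unfolding c_def using p Sv by (simp add: powr_powr)
      finally show ?thesis .
    qed
    have "(\<Sum>i\<in>I. (v i / c) * y i) \<le> (\<Sum>i\<in>I. (v i / c) powr p / p + y i powr q / q)"
      by (rule sum_mono) (rule young)
    also have "\<dots> = (\<Sum>i\<in>I. v i powr p) / Sv / p + (\<Sum>i\<in>I. y i powr q) / q"
      by (simp add: sum.distrib vc sum_divide_distrib)
    also have "\<dots> = 1" using Sv q yq by (simp add: Sv_def)
    finally have "(\<Sum>i\<in>I. v i * y i) / c \<le> 1" by (simp add: sum_divide_distrib)
    then show ?thesis using c by (simp add: c_def Sv_def field_simps)
  qed
  show ?thesis using ypos eq hold by blast
qed

definition Qn :: "real \<Rightarrow> nat \<Rightarrow> (nat set \<Rightarrow> real) \<Rightarrow> real" where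
  "Qn p n w = (\<Sum>A\<in>Pow {..<n}. w A powr p) powr (1/p)"

lemma lpnorm_Qn: "lpnorm p n f = Qn p n (\<lambda>A. norm (f A)) / (2 ^ n) powr (1/p)"
  unfolding lpnorm_def Qn_def by (rule powr_divide)

lemma lpnorm_nonneg: "lpnorm p n f \<ge> 0"
  by (simp add: lpnorm_def)

lemma lpnorm_mono:
  assumes "p > 0" "\<And>A. A \<in> Pow {..<n} \<Longrightarrow> norm (f A) \<le> norm (g A)"
  shows "lpnorm p n f \<le> lpnorm p n g"
  unfolding lpnorm_def
  by (intro powr_mono2 divide_right_mono sum_mono powr_mono2) (use assms in \<open>auto intro!: sum_nonneg divide_nonneg_nonneg\<close>)

lemma lpnorm_cong:
  assumes "\<And>A. A \<in> Pow {..<n} \<Longrightarrow> norm (f A) = norm (g A)"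
  shows "lpnorm p n f = lpnorm p n g"
  unfolding lpnorm_def using assms by simp

lemma lpnorm_scale:
  assumes "p > 0" "c \<ge> 0" "\<And>A. A \<in> Pow {..<n} \<Longrightarrow> norm (f A) = c * norm (g A)"
  shows "lpnorm p n f = c * lpnorm p n g"
proof -
  have "(\<Sum>A\<in>Pow {..<n}. norm (f A) powr p) = c powr p * (\<Sum>A\<in>Pow {..<n}. norm (g A) powr p)"
    using assms by (simp add: powr_mult sum_distrib_left)
  then have "lpnorm p n f = ((c powr p) * ((\<Sum>A\<in>Pow {..<n}. norm (g A) powr p) / 2 ^ n)) powr (1/p)"
    unfolding lpnorm_def by simp
  also have "\<dots> = (c powr p) powr (1/p) * lpnorm p n g"
    unfolding lpnorm_def by (rule powr_mult)
  also have "(c powr p) powr (1/p) = c" using assms by (simp add: powr_powr)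
  finally show ?thesis .
qed

lemma Qn_dual:
  assumes "p > 1" "\<And>A. A \<in> Pow {..<n} \<Longrightarrow> w A \<ge> 0"
  obtains y where "\<forall>A\<in>Pow {..<n}. y A \<ge> 0" "(\<Sum>A\<in>Pow {..<n}. w A * y A) = Qn p n w"
    "\<And>v. (\<forall>A\<in>Pow {..<n}. v A \<ge> 0) \<Longrightarrow> (\<Sum>A\<in>Pow {..<n}. v A * y A) \<le> Qn p n v"
  using holder_dual[of "Pow {..<n}" p w] assms unfolding Qn_def by auto

lemma lpnorm_triangle:
  assumes p: "p > 1"
  shows "lpnorm p n (\<lambda>A. f A + g A) \<le> lpnorm p n f + lpnorm p n g"
proof -
  obtain y where y: "\<forall>A\<in>Pow {..<n}. y A \<ge> 0"
     "(\<Sum>A\<in>Pow {..<n}. norm (f A + g A) * y A) = Qn p n (\<lambda>A. norm (f A + g A))"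
     "\<And>v. (\<forall>A\<in>Pow {..<n}. v A \<ge> 0) \<Longrightarrow> (\<Sum>A\<in>Pow {..<n}. v A * y A) \<le> Qn p n v"
    using Qn_dual[OF p, of n "\<lambda>A. norm (f A + g A)"] by auto
  have "Qn p n (\<lambda>A. norm (f A + g A)) \<le> (\<Sum>A\<in>Pow {..<n}. (norm (f A) + norm (g A)) * y A)"
    unfolding y(2)[symmetric] by (intro sum_mono mult_right_mono norm_triangle_ineq) (use y in auto)
  also have "\<dots> = (\<Sum>A\<in>Pow {..<n}. norm (f A) * y A) + (\<Sum>A\<in>Pow {..<n}. norm (g A) * y A)"
    by (simp add: distrib_right sum.distrib)
  also have "\<dots> \<le> Qn p n (\<lambda>A. norm (f A)) + Qn p n (\<lambda>A. norm (g A))"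
    by (intro add_mono y(3)) auto
  finally show ?thesis unfolding lpnorm_Qn by (simp add: add_divide_distrib[symmetric] divide_right_mono)
qed

lemma lpnorm_zero: "p > 0 \<Longrightarrow> lpnorm p n (\<lambda>A. 0) = 0"
  by (simp add: lpnorm_def)

lemma lpnorm_sum:
  assumes p: "p > 1" and "finite J"
  shows "lpnorm p n (\<lambda>A. \<Sum>j\<in>J. F j A) \<le> (\<Sum>j\<in>J. lpnorm p n (F j))"
  using assms(2)
proof (induction J rule: finite_induct)
  case empty
  then show ?case using p by (simp add: lpnorm_zero)
next
  case (insert x J)
  have "lpnorm p n (\<lambda>A. \<Sum>j\<in>insert x J. F j A) = lpnorm p n (\<lambda>A. F x A + (\<Sum>j\<in>J. F j A))"
    using insert by simp
  also have "\<dots> \<le> lpnorm p n (F x) + lpnorm p n (\<lambda>A. \<Sum>j\<in>J. F j A)"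
    by (rule lpnorm_triangle[OF p])
  also have "\<dots> \<le> lpnorm p n (F x) + (\<Sum>j\<in>J. lpnorm p n (F j))"
    using insert by simp
  finally show ?case using insert by simp
qed

lemma lpnorm_integral:
  fixes U :: "real \<Rightarrow> nat set \<Rightarrow> 'a::banach"
  assumes p: "p > 1"
    and int: "\<And>A. A \<in> Pow {..<n} \<Longrightarrow> ((\<lambda>s. U s A) has_integral V A) {a..b}"
    and intn: "\<And>A. A \<in> Pow {..<n} \<Longrightarrow> (\<lambda>s. norm (U s A)) integrable_on {a..b}"
    and bnd: "\<And>s. s \<in> {a..b} \<Longrightarrow> lpnorm p n (U s) \<le> E s"
    and Eint: "E integrable_on {a..b}"
  shows "lpnorm p n V \<le> integral {a..b} E"
proof -
  obtain y where y: "\<forall>A\<in>Pow {..<n}. y A \<ge> 0"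
     "(\<Sum>A\<in>Pow {..<n}. norm (V A) * y A) = Qn p n (\<lambda>A. norm (V A))"
     "\<And>v. (\<forall>A\<in>Pow {..<n}. v A \<ge> 0) \<Longrightarrow> (\<Sum>A\<in>Pow {..<n}. v A * y A) \<le> Qn p n v"
    using Qn_dual[OF p, of n "\<lambda>A. norm (V A)"] by auto
  define cst where "cst = ((2::real) ^ n) powr (1/p)"
  have cst: "cst > 0" by (simp add: cst_def)
  have nV: "norm (V A) \<le> integral {a..b} (\<lambda>s. norm (U s A))" if "A \<in> Pow {..<n}" for A
  proof -
    have "V A = integral {a..b} (\<lambda>s. U s A)" using int[OF that] by (simp add: integral_unique)
    then show ?thesis
      using integral_norm_bound_integral[of "\<lambda>s. U s A" "{a..b}" "\<lambda>s. norm (U s A)"] int[OF that] intn[OF that]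
      by (auto simp: has_integral_integrable)
  qed
  have "Qn p n (\<lambda>A. norm (V A)) \<le> (\<Sum>A\<in>Pow {..<n}. integral {a..b} (\<lambda>s. norm (U s A)) * y A)"
    unfolding y(2)[symmetric] by (intro sum_mono mult_right_mono nV) (use y in auto)
  also have "\<dots> = (\<Sum>A\<in>Pow {..<n}. integral {a..b} (\<lambda>s. norm (U s A) * y A))"
    by (simp add: integral_mult_left)
  also have "\<dots> = integral {a..b} (\<lambda>s. \<Sum>A\<in>Pow {..<n}. norm (U s A) * y A)"
    by (rule integral_sum[symmetric]) (auto intro: integrable_on_mult_left intn)
  also have "\<dots> \<le> integral {a..b} (\<lambda>s. E s * cst)"
  proof (rule integral_le)
    show "(\<lambda>s. \<Sum>A\<in>Pow {..<n}. norm (U s A) * y A) integrable_on {a..b}"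
      by (rule integrable_sum) (auto intro: integrable_on_mult_left intn)
    show "(\<lambda>s. E s * cst) integrable_on {a..b}" using Eint by (rule integrable_on_mult_left)
    fix s assume s: "s \<in> {a..b}"
    have "(\<Sum>A\<in>Pow {..<n}. norm (U s A) * y A) \<le> Qn p n (\<lambda>A. norm (U s A))"
      by (rule y(3)) auto
    also have "\<dots> = lpnorm p n (U s) * cst" unfolding lpnorm_Qn cst_def by simp
    also have "\<dots> \<le> E s * cst" using bnd[OF s] cst by simp
    finally show "(\<Sum>A\<in>Pow {..<n}. norm (U s A) * y A) \<le> E s * cst" .
  qed
  also have "\<dots> = integral {a..b} E * cst" by (simp add: integral_mult_left)
  finally show ?thesis unfolding lpnorm_Qn cst_def[symmetric] using cst by (simp add: divide_le_eq)
qed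




section \<open>Complex structure\<close>

lemma cs_linear: "complex_structure J \<Longrightarrow> linear J"
  by (simp add: complex_structure_def)

lemma cs_JJ: "complex_structure J \<Longrightarrow> J (J x) = - x"
  by (simp add: complex_structure_def)

lemma cs_norm_J: "complex_structure J \<Longrightarrow> norm (J x) = norm x"
proof -
  assume "complex_structure J"
  then have "norm (cos (pi/2) *\<^sub>R x + sin (pi/2) *\<^sub>R J x) = norm x"
    unfolding complex_structure_def by blast
  then show ?thesis by simp
qed

lemma cs_bounded_linear: "complex_structure J \<Longrightarrow> bounded_linear J"
proof -
  assume cs: "complex_structure J"
  have l: "linear J" by (rule cs_linear[OF cs])
  show ?thesis
    by (rule bounded_linear_intro[where K=1])
       (auto simp: linear_add[OF l] linear_scale[OF l] cs_norm_J[OF cs])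
qed

lemma cmult_add_right:
  "complex_structure J \<Longrightarrow> cmult J c (x + y) = cmult J c x + cmult J c y"
  by (simp add: cmult_def linear_add[OF cs_linear] scaleR_add_right)

lemma cmult_zero_right: "complex_structure J \<Longrightarrow> cmult J c 0 = 0"
  by (simp add: cmult_def linear_0[OF cs_linear])

lemma cmult_sum_right:
  assumes "complex_structure J"
  shows "cmult J c (\<Sum>j\<in>I. x j) = (\<Sum>j\<in>I. cmult J c (x j))"
proof (induction I rule: infinite_finite_induct)
  case (infinite A)
  then show ?case by (simp add: cmult_zero_right[OF assms])
next
  case empty
  then show ?case by (simp add: cmult_zero_right[OF assms])
next
  case (insert x F)
  then show ?case by (simp add: cmult_add_right[OF assms])
qed

lemma cmult_add_left: "cmult J (c + d) x = cmult J c x + cmult J d x"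
  by (simp add: cmult_def scaleR_add_left)

lemma cmult_sum_left: "cmult J (\<Sum>j\<in>I. c j) x = (\<Sum>j\<in>I. cmult J (c j) x)"
  by (simp add: cmult_def scaleR_sum_left sum.distrib)

lemma cmult_of_real [simp]: "cmult J (of_real r) x = r *\<^sub>R x"
  by (simp add: cmult_def)

lemma cmult_one [simp]: "cmult J 1 x = x"
  by (simp add: cmult_def)

lemma cmult_mult:
  assumes cs: "complex_structure J"
  shows "cmult J (c * d) x = cmult J c (cmult J d x)"
proof -
  have l: "linear J" by (rule cs_linear[OF cs])
  show ?thesis
    by (simp add: cmult_def linear_add[OF l] linear_scale[OF l] cs_JJ[OF cs] algebra_simps)
qed

lemma norm_cmult:
  assumes cs: "complex_structure J"
  shows "norm (cmult J c x) = cmod c * norm x"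
proof -
  have "cmult J c x = cmod c *\<^sub>R (cos (Arg2pi c) *\<^sub>R x + sin (Arg2pi c) *\<^sub>R J x)"
    unfolding cmult_def
    by (simp add: scaleR_add_right cos_Arg2pi sin_Arg2pi)
  also have "norm \<dots> = cmod c * norm x"
    using cs unfolding complex_structure_def by simp
  finally show ?thesis .
qed

lemma bounded_linear_cmult_left:
  assumes "complex_structure J"
  shows "bounded_linear (\<lambda>c. cmult J c x)"
  unfolding cmult_def
  by (intro bounded_linear_add bounded_linear_compose[OF bounded_linear_scaleR_left bounded_linear_Re]
      bounded_linear_compose[OF bounded_linear_scaleR_left bounded_linear_Im])

lemma continuous_on_cmult:
  assumes cs: "complex_structure J" and c: "continuous_on S c" and v: "continuous_on S v"
  shows "continuous_on S (\<lambda>s. cmult J (c s) (v s))"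
proof -
  have "continuous_on S (\<lambda>s. J (v s))"
    using linear_continuous_on[OF cs_bounded_linear[OF cs]] v by (rule continuous_on_compose2) auto
  then show ?thesis
    unfolding cmult_def by (intro continuous_intros c v)
qed

lemma cmult_scaleR_right:
  assumes cs: "complex_structure J"
  shows "cmult J c (r *\<^sub>R x) = r *\<^sub>R cmult J c x"
  by (simp add: cmult_def linear_scale[OF cs_linear[OF cs]] scaleR_add_right mult.commute)

lemma norm_exp_neg_mult_nat:
  "cmod (exp (- z * of_nat k)) = exp (- Re z * real k)"
  by (simp add: norm_exp_eq_Re)

lemma exp_real_cx: "exp (- (of_real t) * of_nat k) = (of_real (exp (- t * real k)) :: complex)"
proof -
  have "exp (- (of_real t) * of_nat k) = exp (of_real (- t * real k) :: complex)" by simp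
  also have "\<dots> = of_real (exp (- t * real k))" by (rule exp_of_real)
  finally show ?thesis .
qed

lemma heat_real:
  fixes f :: "nat set \<Rightarrow> 'a::real_vector"
  shows "heat J n (of_real t) f A = (\<Sum>S\<in>Pow {..<n}. exp (- t * real (card S)) *\<^sub>R (walsh S A *\<^sub>R fourier n f S))"
  unfolding heat_def exp_real_cx cmult_of_real ..

lemma lpnorm_cmult:
  assumes cs: "complex_structure J" and p: "p > 0"
  shows "lpnorm p n (\<lambda>A. cmult J c (F A)) = cmod c * lpnorm p n F"
  by (rule lpnorm_scale) (use p in \<open>auto simp: norm_cmult[OF cs]\<close>)




definition lev :: "nat \<Rightarrow> (nat set \<Rightarrow> 'a::real_vector) \<Rightarrow> nat \<Rightarrow> nat set \<Rightarrow> 'a" where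
  "lev n g k A = (\<Sum>S\<in>{S. S \<in> Pow {..<n} \<and> card S = k}. walsh S A *\<^sub>R fourier n g S)"

lemma heat_levels:
  assumes cs: "complex_structure J"
  shows "heat J n z g A = (\<Sum>k\<in>{..n}. cmult J (exp (- z * of_nat k)) (lev n g k A))"
proof -
  have sub: "card ` Pow {..<n} \<subseteq> {..n}"
  proof
    fix k assume "k \<in> card ` Pow {..<n}"
    then obtain S where "S \<subseteq> {..<n}" "k = card S" by auto
    then show "k \<in> {..n}" using card_mono[of "{..<n}" S] by auto
  qed
  have "heat J n z g A = (\<Sum>k\<in>{..n}. \<Sum>S\<in>{S. S \<in> Pow {..<n} \<and> card S = k}.
          cmult J (exp (- z * of_nat (card S))) (walsh S A *\<^sub>R fourier n g S))"
    unfolding heat_def by (rule sum.group[symmetric]) (use sub in auto)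
  also have "\<dots> = (\<Sum>k\<in>{..n}. cmult J (exp (- z * of_nat k)) (lev n g k A))"
    unfolding lev_def cmult_sum_right[OF cs] by (intro sum.cong refl) auto
  finally show ?thesis .
qed

lemma lev_tail:
  assumes "\<forall>S\<subseteq>{..<n}. card S \<le> d \<longrightarrow> fourier n g S = 0" "k \<le> d"
  shows "lev n g k A = 0"
  unfolding lev_def using assms by (intro sum.neutral) auto

section \<open>Roots of unity\<close>

lemma roots_unity_sum:
  fixes D :: int and N :: nat
  assumes N: "N > 0" and D: "\<bar>D\<bar> < int N"
  shows "(\<Sum>j<N. exp (of_nat j * (of_int D * (\<i> * of_real (2 * pi / real N))))) = (if D = 0 then (of_nat N :: complex) else 0)"
proof (cases "D = 0")
  case True
  then show ?thesis by simp
next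
  case False
  define u where "u = of_int D * (\<i> * of_real (2 * pi / real N))"
  have sum: "(\<Sum>j<N. exp (of_nat j * u)) = (\<Sum>j<N. exp u ^ j)"
    by (simp add: exp_of_nat_mult)
  have wN: "exp u ^ N = 1"
  proof -
    have "exp u ^ N = exp (of_nat N * u)" by (simp add: exp_of_nat_mult)
    also have "exp (of_nat N * u) = 1"
    proof (subst exp_eq_1, intro conjI exI)
      show "Re (of_nat N * u) = 0" by (simp add: u_def)
      show "Im (of_nat N * u) = of_int (2 * D) * pi" using N by (simp add: u_def field_simps)
    qed
    finally show ?thesis .
  qed
  have w1: "exp u \<noteq> 1"
  proof
    assume "exp u = 1"
    then obtain m :: int where m: "Im u = of_int (2 * m) * pi" by (auto simp: exp_eq_1)
    have "Im u = of_int D * (2 * pi / real N)" by (simp add: u_def)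
    with m have "of_int D / of_nat N = (of_int m :: real)" using N by (simp add: field_simps)
    then have Dm: "D = m * int N" using N by (simp add: field_simps) (metis of_int_eq_iff of_int_mult of_int_of_nat_eq)
    then have "m \<noteq> 0" using False by auto
    then have "1 \<le> \<bar>m\<bar>" by linarith
    then have "\<bar>D\<bar> \<ge> int N" unfolding Dm abs_mult using mult_right_mono[of 1 "\<bar>m\<bar>" "int N"] by simp
    with D show False by simp
  qed
  show ?thesis using False unfolding u_def[symmetric] sum sum_gp_strict using w1 wN by simp
qed

definition zpt :: "nat \<Rightarrow> real \<Rightarrow> nat \<Rightarrow> complex" where
  "zpt n x j = of_real x + \<i> * of_real (2 * pi * (real j - real n) / real (2 * n + 1))"

lemma zpt_alt: "zpt n x j = of_real x + (of_nat j - of_nat n) * (\<i> * of_real (2 * pi / real (2 * n + 1)))"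
proof -
  have "2 * pi * (real j - real n) / real (2 * n + 1) = (real j - real n) * (2 * pi / real (2 * n + 1))"
    by simp
  then have "of_real (2 * pi * (real j - real n) / real (2 * n + 1)) = (of_nat j - of_nat n) * (of_real (2 * pi / real (2 * n + 1)) :: complex)"
    by simp
  then show ?thesis unfolding zpt_def by (simp add: algebra_simps)
qed

lemma zpt_sum:
  fixes k m :: nat
  assumes "k \<le> n" "m \<le> n"
  shows "(\<Sum>j<2*n+1. exp (zpt n x j * of_nat k) * exp (- zpt n x j * of_nat m)) = (if k = m then of_nat (2*n+1) else 0)"
proof -
  define N where "N = 2 * n + 1"
  define D where "D = int k - int m"
  define c where "c = \<i> * of_real (2 * pi / real N)"
  define u where "u = of_int D * c"
  have trm: "exp (zpt n x j * of_nat k) * exp (- zpt n x j * of_nat m)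
      = exp (of_real (x * of_int D)) * exp (- (of_nat n * u)) * exp (of_nat j * u)" for j
  proof -
    have "exp (zpt n x j * of_nat k) * exp (- zpt n x j * of_nat m) = exp (zpt n x j * of_int D)"
      by (simp add: D_def exp_add[symmetric] algebra_simps)
    also have "zpt n x j * of_int D = of_real (x * of_int D) + (- (of_nat n * u)) + of_nat j * u"
    proof -
      have zc: "zpt n x j = of_real x + (of_nat j - of_nat n) * c" unfolding zpt_alt c_def N_def ..
      show ?thesis unfolding zc u_def by (simp add: algebra_simps)
    qed
    also have "exp \<dots> = exp (of_real (x * of_int D)) * exp (- (of_nat n * u)) * exp (of_nat j * u)"
      by (simp only: exp_add)
    finally show ?thesis .
  qed
  have "(\<Sum>j<N. exp (zpt n x j * of_nat k) * exp (- zpt n x j * of_nat m))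
      = exp (of_real (x * of_int D)) * exp (- (of_nat n * u)) * (\<Sum>j<N. exp (of_nat j * u))"
    by (simp only: trm sum_distrib_left)
  also have "(\<Sum>j<N. exp (of_nat j * u)) = (if D = 0 then of_nat N else 0)"
    unfolding u_def c_def by (rule roots_unity_sum) (use assms in \<open>auto simp: N_def D_def\<close>)
  finally have fin: "(\<Sum>j<N. exp (zpt n x j * of_nat k) * exp (- zpt n x j * of_nat m))
      = exp (of_real (x * of_int D)) * exp (- (of_nat n * u)) * (if D = 0 then of_nat N else 0)" .
  show ?thesis unfolding N_def[symmetric] fin by (cases "k = m") (simp_all add: D_def u_def)
qed

lemma lev_average:
  assumes cs: "complex_structure J" and k: "k \<le> n"
  shows "lev n g k A = (1 / real (2*n+1)) *\<^sub>R (\<Sum>j<2*n+1. cmult J (exp (zpt n x j * of_nat k)) (heat J n (zpt n x j) g A))"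
proof -
  have "(\<Sum>j<2*n+1. cmult J (exp (zpt n x j * of_nat k)) (heat J n (zpt n x j) g A))
     = (\<Sum>j<2*n+1. \<Sum>m\<in>{..n}. cmult J (exp (zpt n x j * of_nat k) * exp (- zpt n x j * of_nat m)) (lev n g m A))"
    by (simp add: heat_levels[OF cs] cmult_sum_right[OF cs] cmult_mult[OF cs])
  also have "\<dots> = (\<Sum>m\<in>{..n}. \<Sum>j<2*n+1. cmult J (exp (zpt n x j * of_nat k) * exp (- zpt n x j * of_nat m)) (lev n g m A))"
    by (rule sum.swap)
  also have "\<dots> = (\<Sum>m\<in>{..n}. cmult J (\<Sum>j<2*n+1. exp (zpt n x j * of_nat k) * exp (- zpt n x j * of_nat m)) (lev n g m A))"
    by (intro sum.cong refl) (rule cmult_sum_left[symmetric])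
  also have "\<dots> = (\<Sum>m\<in>{..n}. if m = k then real (2*n+1) *\<^sub>R lev n g m A else 0)"
  proof (intro sum.cong refl)
    fix m assume "m \<in> {..n}"
    then show "cmult J (\<Sum>j<2*n+1. exp (zpt n x j * of_nat k) * exp (- zpt n x j * of_nat m)) (lev n g m A)
       = (if m = k then real (2*n+1) *\<^sub>R lev n g m A else 0)"
      by (subst zpt_sum[OF k]) (auto simp: cmult_def)
  qed
  also have "\<dots> = real (2*n+1) *\<^sub>R lev n g k A" using k by (simp add: sum.delta')
  finally show ?thesis by simp
qed

section \<open>Sector geometry\<close>

definition R0 :: "real \<Rightarrow> real" where
  "R0 \<alpha> = pi * cos (\<alpha> * pi / 2) / sin (\<alpha> * pi / 2)"

lemma theta_le: "0 < \<alpha> \<Longrightarrow> \<alpha> \<le> 1 \<Longrightarrow> \<alpha> * pi / 2 \<le> pi / 2"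
proof -
  assume "0 < \<alpha>" "\<alpha> \<le> 1"
  then have "\<alpha> * pi \<le> 1 * pi" by (intro mult_right_mono) auto
  then show ?thesis by simp
qed

lemma theta_pos: "0 < \<alpha> \<Longrightarrow> \<alpha> * pi / 2 > 0"
  by simp

lemma sin_theta_pos: "0 < \<alpha> \<Longrightarrow> \<alpha> \<le> 1 \<Longrightarrow> sin (\<alpha> * pi / 2) > 0"
  using theta_le[of \<alpha>] theta_pos[of \<alpha>] by (intro sin_gt_zero) auto

lemma cos_theta_nonneg: "0 < \<alpha> \<Longrightarrow> \<alpha> \<le> 1 \<Longrightarrow> cos (\<alpha> * pi / 2) \<ge> 0"
  using theta_le[of \<alpha>] theta_pos[of \<alpha>] pi_gt_zero by (intro cos_ge_zero) linarith+

lemma R0_nonneg: "0 < \<alpha> \<Longrightarrow> \<alpha> \<le> 1 \<Longrightarrow> R0 \<alpha> \<ge> 0"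
  unfolding R0_def using sin_theta_pos[of \<alpha>] cos_theta_nonneg[of \<alpha>]
  by (intro divide_nonneg_nonneg mult_nonneg_nonneg) auto

lemma in_sector_strip:
  assumes a: "0 < \<alpha>" "\<alpha> \<le> 1" and x: "x \<ge> R0 \<alpha>" "x > 0" and y: "\<bar>Im z\<bar> \<le> pi" and re: "Re z = x"
  shows "z \<in> sector \<alpha>"
proof (cases "\<alpha> = 1")
  case True
  have "\<bar>Arg z\<bar> \<le> pi / 2" using Arg_Re_nonneg[of z] re x by auto
  then show ?thesis using True by (simp add: sector_def)
next
  case False
  define \<theta> where "\<theta> = \<alpha> * pi / 2"
  have th: "0 < \<theta>" "\<theta> < pi / 2" using a False by (auto simp: \<theta>_def)
  have c: "cos \<theta> > 0" using th by (intro cos_gt_zero) auto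
  have s: "sin \<theta> > 0" using sin_theta_pos[OF a] by (simp add: \<theta>_def)
  have "\<bar>Im z / Re z\<bar> \<le> pi / x" using y re x by (simp add: abs_div divide_right_mono)
  also have "pi / x \<le> tan \<theta>"
  proof -
    have "pi * cos \<theta> / sin \<theta> \<le> x" using x by (simp add: R0_def \<theta>_def)
    then have "pi * cos \<theta> \<le> x * sin \<theta>" using s by (simp add: divide_le_eq)
    then show ?thesis using c x by (simp add: tan_def divide_le_eq field_simps)
  qed
  finally have le: "\<bar>Im z / Re z\<bar> \<le> tan \<theta>" .
  have le1: "Im z / Re z \<le> tan \<theta>" "- tan \<theta> \<le> Im z / Re z" using le by linarith+
  have "Arg z = arctan (Im z / Re z)" by (rule arg_conv_arctan) (use re x in auto)
  moreover have "arctan (Im z / Re z) \<le> \<theta>"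
    using le1 arctan_le_iff[of "Im z / Re z" "tan \<theta>"] arctan_tan[of \<theta>] th by auto
  moreover have "- \<theta> \<le> arctan (Im z / Re z)"
    using le1 arctan_le_iff[of "- tan \<theta>" "Im z / Re z"] arctan_tan[of \<theta>] th by (auto simp: arctan_minus)
  ultimately show ?thesis by (auto simp: sector_def \<theta>_def)
qed

lemma zpt_in_sector:
  assumes a: "0 < \<alpha>" "\<alpha> \<le> 1" and x: "x \<ge> R0 \<alpha>" "x > 0" and j: "j < 2*n+1"
  shows "zpt n x j \<in> sector \<alpha>"
proof (rule in_sector_strip[OF a x _ refl[of "Re (zpt n x j)", THEN trans]])
  show "Re (zpt n x j) = x" by (simp add: zpt_def)
  have "\<bar>real j - real n\<bar> \<le> real n" using j by linarith
  then have "\<bar>real j - real n\<bar> / real (2*n+1) \<le> 1/2" by (simp add: field_simps)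
  then have "2 * pi * (\<bar>real j - real n\<bar> / real (2*n+1)) \<le> 2 * pi * (1/2)" by (intro mult_left_mono) auto
  then show "\<bar>Im (zpt n x j)\<bar> \<le> pi" by (simp add: zpt_def abs_mult abs_div)
qed




lemma geom_tail:
  fixes q :: real
  assumes q: "0 \<le> q" "2 * q \<le> 1"
  shows "(\<Sum>k\<le>n. if d < k then q ^ k else 0) + (if d \<le> n then 2 * q ^ (n+1) else 0) \<le> 2 * q ^ (d+1)"
proof (induction n)
  case 0
  then show ?case using q by auto
next
  case (Suc n)
  have S0: "(\<Sum>k\<le>n. if d < k then q ^ k else (0::real)) = 0" if "n < d"
    using that by (intro sum.neutral) auto
  consider "d \<le> n" | "d = Suc n" | "Suc n < d" by linarith
  then show ?case
  proof cases
    case 1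
    have "2 * q ^ (Suc n + 1) \<le> q ^ (n+1)"
      using q by (simp add: mult.assoc[symmetric] mult_right_le_one_le)
        (metis mult.assoc mult_left_mono mult.commute mult_1 power_Suc zero_le_power)
    then show ?thesis using Suc.IH 1 by simp
  next
    case 2
    then show ?thesis using S0[of] by (simp add: 2)
  next
    case 3
    then show ?thesis using S0 q by simp
  qed
qed

lemma geom_tail':
  fixes q :: real
  assumes q: "0 \<le> q" "2 * q \<le> 1"
  shows "(\<Sum>k\<le>n. if d < k then q ^ k else 0) \<le> 2 * q ^ (d+1)"
  using geom_tail[OF q, where n=n and d=d] q by (smt (verit) zero_le_power)

lemma lev_bound:
  assumes cs: "complex_structure J" and p: "p > 1" and a: "0 < \<alpha>" "\<alpha> \<le> 1"
    and hyp: "\<forall>z\<in>sector \<alpha>. lpnorm p n (heat J n z g) \<le> M * lpnorm p n g"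
    and x: "x \<ge> R0 \<alpha>" "x > 0" and k: "k \<le> n"
  shows "lpnorm p n (lev n g k) \<le> exp (x * real k) * M * lpnorm p n g"
proof -
  define N where "N = 2 * n + 1"
  have N: "real N > 0" by (simp add: N_def)
  define F where "F j A = cmult J (exp (zpt n x j * of_nat k)) (heat J n (zpt n x j) g A)" for j A
  have "lpnorm p n (lev n g k) = lpnorm p n (\<lambda>A. (1 / real N) *\<^sub>R (\<Sum>j<N. F j A))"
    unfolding F_def N_def by (rule arg_cong[where f="lpnorm p n"], rule ext, rule lev_average[OF cs k])
  also have "\<dots> = (1 / real N) * lpnorm p n (\<lambda>A. \<Sum>j<N. F j A)"
    by (rule lpnorm_scale) (use p N in auto)
  also have "\<dots> \<le> (1 / real N) * (\<Sum>j<N. lpnorm p n (F j))"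
    by (intro mult_left_mono lpnorm_sum p) (use N in auto)
  also have "\<dots> \<le> (1 / real N) * (\<Sum>j<N. exp (x * real k) * (M * lpnorm p n g))"
  proof (intro mult_left_mono sum_mono)
    fix j assume j: "j \<in> {..<N}"
    have "lpnorm p n (F j) = cmod (exp (zpt n x j * of_nat k)) * lpnorm p n (heat J n (zpt n x j) g)"
      unfolding F_def by (rule lpnorm_cmult[OF cs]) (use p in auto)
    also have "cmod (exp (zpt n x j * of_nat k)) = exp (x * real k)"
      by (simp add: norm_exp_eq_Re zpt_def)
    also have "lpnorm p n (heat J n (zpt n x j) g) \<le> M * lpnorm p n g"
      using hyp zpt_in_sector[OF a x, of j n] j by (auto simp: N_def)
    finally show "lpnorm p n (F j) \<le> exp (x * real k) * (M * lpnorm p n g)" by simp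
  qed (use N in auto)
  also have "\<dots> = exp (x * real k) * M * lpnorm p n g" using N by simp
  finally show ?thesis .
qed

definition R1 :: "real \<Rightarrow> real" where "R1 \<alpha> = R0 \<alpha> + 1"

lemma decay:
  assumes cs: "complex_structure J" and p: "p > 1" and a: "0 < \<alpha>" "\<alpha> \<le> 1"
    and hyp: "\<forall>z\<in>sector \<alpha>. lpnorm p n (heat J n z g) \<le> M * lpnorm p n g" and M: "M \<ge> 0"
    and tail: "\<forall>S\<subseteq>{..<n}. card S \<le> d \<longrightarrow> fourier n g S = 0"
    and z: "Re z \<ge> R1 \<alpha> + 1"
  shows "lpnorm p n (heat J n z g) \<le> 2 * M * lpnorm p n g * exp (- (Re z - R1 \<alpha>) * real (d + 1))"
proof -
  define q where "q = exp (- (Re z - R1 \<alpha>))"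
  have q: "0 \<le> q" "2 * q \<le> 1"
  proof -
    show "0 \<le> q" by (simp add: q_def)
    have "q \<le> exp (-1)" unfolding q_def using z by simp
    moreover have "2 * exp (-1::real) \<le> 1"
    proof -
      have "2 \<le> exp (1::real)" using exp_ge_add_one_self[of 1] by simp
      then show ?thesis by (simp add: exp_minus field_simps)
    qed
    ultimately show "2 * q \<le> 1" by simp
  qed
  have R0: "R0 \<alpha> \<ge> 0" by (rule R0_nonneg[OF a])
  have "lpnorm p n (heat J n z g) = lpnorm p n (\<lambda>A. \<Sum>k\<in>{..n}. cmult J (exp (- z * of_nat k)) (lev n g k A))"
    by (rule arg_cong[where f="lpnorm p n"], rule ext, rule heat_levels[OF cs])
  also have "\<dots> \<le> (\<Sum>k\<in>{..n}. lpnorm p n (\<lambda>A. cmult J (exp (- z * of_nat k)) (lev n g k A)))"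
    by (rule lpnorm_sum[OF p]) simp
  also have "\<dots> \<le> (\<Sum>k\<le>n. M * lpnorm p n g * (if d < k then q ^ k else 0))"
  proof (rule sum_mono)
    fix k assume k: "k \<in> {..n}"
    have "lpnorm p n (\<lambda>A. cmult J (exp (- z * of_nat k)) (lev n g k A)) = exp (- Re z * real k) * lpnorm p n (lev n g k)"
      by (subst lpnorm_cmult[OF cs]) (use p in \<open>auto simp: norm_exp_eq_Re\<close>)
    also have "\<dots> \<le> M * lpnorm p n g * (if d < k then q ^ k else 0)"
    proof (cases "d < k")
      case True
      have "lpnorm p n (lev n g k) \<le> exp (R1 \<alpha> * real k) * M * lpnorm p n g"
        by (rule lev_bound[OF cs p a hyp]) (use R0 k in \<open>auto simp: R1_def\<close>)
      then have "exp (- Re z * real k) * lpnorm p n (lev n g k) \<le> exp (- Re z * real k) * (exp (R1 \<alpha> * real k) * M * lpnorm p n g)"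
        by (intro mult_left_mono) auto
      also have "\<dots> = M * lpnorm p n g * q ^ k"
        by (simp add: q_def exp_add[symmetric] exp_of_nat_mult[symmetric] algebra_simps)
      finally show ?thesis using True by simp
    next
      case False
      then have "lev n g k = (\<lambda>A. 0)" using lev_tail[OF tail] by (auto simp: fun_eq_iff)
      then show ?thesis using False p by (simp add: lpnorm_zero)
    qed
    finally show "lpnorm p n (\<lambda>A. cmult J (exp (- z * of_nat k)) (lev n g k A)) \<le> M * lpnorm p n g * (if d < k then q ^ k else 0)" .
  qed
  also have "\<dots> = M * lpnorm p n g * (\<Sum>k\<le>n. if d < k then q ^ k else 0)"
    by (simp add: sum_distrib_left)
  also have "\<dots> \<le> M * lpnorm p n g * (2 * q ^ (d+1))"
    by (intro mult_left_mono geom_tail'[OF q] mult_nonneg_nonneg M lpnorm_nonneg)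
  also have "q ^ (d+1) = exp (- (Re z - R1 \<alpha>) * real (d + 1))"
    by (simp add: q_def exp_of_nat_mult[symmetric] mult.commute exp_add[symmetric] distrib_right)
  finally show ?thesis by simp
qed




lemma notin_segment_Im:
  assumes "0 < Im ((b - a) * cnj (b - z))"
  shows "z \<notin> closed_segment a b"
proof
  assume "z \<in> closed_segment a b"
  then obtain u where u: "z = (1 - u) *\<^sub>R a + u *\<^sub>R b" unfolding closed_segment_def by auto
  have bz: "b - z = of_real (1 - u) * (b - a)" unfolding u by (simp add: scaleR_conv_of_real algebra_simps)
  have "(b - a) * cnj (b - z) = (b - a) * cnj (of_real (1 - u) * (b - a))" by (simp only: bz)
  also have "\<dots> = of_real (1 - u) * ((b - a) * cnj (b - a))" by (simp add: mult.left_commute)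
  also have "(b - a) * cnj (b - a) = of_real ((cmod (b - a))\<^sup>2)" by (simp only: complex_norm_square)
  finally have "Im ((b - a) * cnj (b - z)) = 0" by (simp del: of_real_power)
  with assms show False by simp
qed

lemma wn_tri:
  assumes ab: "0 < Im ((b - a) * cnj (b - z))" and bc: "0 < Im ((c - b) * cnj (c - z))"
      and ca: "0 < Im ((a - c) * cnj (a - z))"
  shows "winding_number (linepath a b +++ linepath b c +++ linepath c a) z = 1"
proof -
  have znot[simp]: "z \<notin> closed_segment a b" "z \<notin> closed_segment b c" "z \<notin> closed_segment c a"
    using notin_segment_Im ab bc ca by blast+
  have gt0: "0 < Re (winding_number (linepath a b +++ linepath b c +++ linepath c a) z)"
    using assms
    by (simp add: winding_number_linepath_pos_lt path_image_join winding_number_join_pos_combined)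
  have lt2: "Re (winding_number (linepath a b +++ linepath b c +++ linepath c a) z) < 2"
    using winding_number_lt_half_linepath [of _ a b]
    using winding_number_lt_half_linepath [of _ b c]
    using winding_number_lt_half_linepath [of _ c a] znot
    by (fastforce simp add: winding_number_join path_image_join)
  show ?thesis
    by (rule winding_number_eq_1) (simp_all add: path_image_join gt0 lt2)
qed

section \<open>Scalar Cauchy formula on a triangle\<close>

definition Wk :: "(complex \<Rightarrow> complex) \<Rightarrow> real \<Rightarrow> complex \<Rightarrow> complex \<Rightarrow> real \<Rightarrow> complex" where
  "Wk K t u v s = K (linepath u v s) * (v - u) / ((linepath u v s - of_real t) * (2 * of_real pi * \<i>))"

definition tri_ok :: "complex \<Rightarrow> complex \<Rightarrow> complex \<Rightarrow> complex \<Rightarrow> bool" where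
  "tri_ok a b c z \<longleftrightarrow> 0 < Im ((b - a) * cnj (b - z)) \<and> 0 < Im ((c - b) * cnj (c - z)) \<and>
     0 < Im ((a - c) * cnj (a - z)) \<and> 0 \<le> Re a \<and> 0 \<le> Re b \<and> 0 \<le> Re c"

lemma seg_in_halfplane:
  assumes "0 \<le> Re u" "0 \<le> Re v"
  shows "closed_segment u v \<subseteq> {z. 0 \<le> Re z}"
  by (rule closed_segment_subset) (use assms convex_halfspace_Re_ge[of 0] in auto)

lemma edge_cont:
  assumes Kc: "continuous_on {z. 0 \<le> Re z} K" and uv: "0 \<le> Re u" "0 \<le> Re v"
    and t: "of_real t \<notin> closed_segment u v"
  shows "continuous_on {0..1} (Wk K t u v)"
proof -
  have seg: "linepath u v ` {0..1} \<subseteq> {z. 0 \<le> Re z}"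
    using seg_in_halfplane[OF uv] linepath_in_path by blast
  have c1: "continuous_on {0..1} (\<lambda>s. K (linepath u v s))"
    by (rule continuous_on_compose2[OF Kc continuous_on_linepath seg])
  have nz: "linepath u v s - of_real t \<noteq> 0" if "s \<in> {0..1}" for s
    using linepath_in_path[OF that, of u v] t by auto
  show ?thesis unfolding Wk_def
    by (intro continuous_intros c1) (use nz in auto)
qed

lemma scalar_cauchy:
  fixes K :: "complex \<Rightarrow> complex" and t :: real and k :: nat
  assumes tri: "tri_ok a b c (of_real t)" and t: "t > 0"
    and Kc: "continuous_on {z. 0 \<le> Re z} K" and Kh: "K holomorphic_on {z. 0 < Re z}"
    and K1: "K (of_real t) = 1"
  shows "((\<lambda>s. exp (- linepath a b s * of_nat k) * Wk K t a b s) has_integral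
            integral {0..1} (\<lambda>s. exp (- linepath a b s * of_nat k) * Wk K t a b s)) {0..1}"
    and "((\<lambda>s. exp (- linepath b c s * of_nat k) * Wk K t b c s) has_integral
            integral {0..1} (\<lambda>s. exp (- linepath b c s * of_nat k) * Wk K t b c s)) {0..1}"
    and "((\<lambda>s. exp (- linepath c a s * of_nat k) * Wk K t c a s) has_integral
            integral {0..1} (\<lambda>s. exp (- linepath c a s * of_nat k) * Wk K t c a s)) {0..1}"
    and "integral {0..1} (\<lambda>s. exp (- linepath a b s * of_nat k) * Wk K t a b s)
       + integral {0..1} (\<lambda>s. exp (- linepath b c s * of_nat k) * Wk K t b c s)
       + integral {0..1} (\<lambda>s. exp (- linepath c a s * of_nat k) * Wk K t c a s) = exp (- of_real t * of_nat k)"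
proof -
  define z where "z = (of_real t :: complex)"
  have tri': "0 < Im ((b - a) * cnj (b - z))" "0 < Im ((c - b) * cnj (c - z))"
      "0 < Im ((a - c) * cnj (a - z))" "0 \<le> Re a" "0 \<le> Re b" "0 \<le> Re c"
    using tri by (auto simp: tri_ok_def z_def)
  have znot: "z \<notin> closed_segment a b" "z \<notin> closed_segment b c" "z \<notin> closed_segment c a"
    using notin_segment_Im tri' by blast+
  define f where "f w = exp (- w * of_nat k) * K w" for w
  define S where "S = {w::complex. 0 \<le> Re w}"
  have S': "S = {w. (1::complex) \<bullet> w \<ge> 0}" by (simp add: S_def inner_complex_def)
  have intS: "interior S = {w. 0 < Re w}" unfolding S' by (subst interior_halfspace_ge) (auto simp: inner_complex_def)
  have cvx: "convex S" unfolding S_def using convex_halfspace_Re_ge[of 0] by simp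
  have fc: "continuous_on S f" unfolding f_def S_def by (intro continuous_intros Kc)
  have fh: "f holomorphic_on {w. 0 < Re w}" unfolding f_def by (intro holomorphic_intros Kh)
  have fd: "f field_differentiable at x" if "x \<in> interior S - {}" for x
    using that intS by (intro holomorphic_on_imp_differentiable_at[OF fh open_halfspace_Re_gt]) auto
  define \<gamma> where "\<gamma> = linepath a b +++ linepath b c +++ linepath c a"
  have vp: "valid_path \<gamma>" unfolding \<gamma>_def by (intro valid_path_join) auto
  have segS: "closed_segment a b \<subseteq> S" "closed_segment b c \<subseteq> S" "closed_segment c a \<subseteq> S"
    unfolding S_def using seg_in_halfplane tri' by auto
  have pim: "path_image \<gamma> \<subseteq> S - {z}"
    unfolding \<gamma>_def using segS znot by (auto simp: path_image_join)
  have zin: "z \<in> interior S - {}" using t by (simp add: intS z_def)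
  have cauchy: "((\<lambda>w. f w / (w - z)) has_contour_integral (2 * pi * \<i> * winding_number \<gamma> z * f z)) \<gamma>"
    by (rule Cauchy_integral_formula_weak[OF cvx _ fc fd zin vp pim]) (auto simp: \<gamma>_def)
  have wn: "winding_number \<gamma> z = 1" unfolding \<gamma>_def by (rule wn_tri) (use tri' in auto)
  have fz: "f z = exp (- z * of_nat k)" using K1 by (simp add: f_def z_def)
  define h where "h w = f w / (w - z)" for w
  have hc: "continuous_on (closed_segment u v) h" if "closed_segment u v \<subseteq> S" "z \<notin> closed_segment u v" for u v
    unfolding h_def using that by (intro continuous_intros continuous_on_subset[OF fc]) auto
  have hi: "h contour_integrable_on linepath u v" if "closed_segment u v \<subseteq> S" "z \<notin> closed_segment u v" for u v
    by (rule contour_integrable_continuous_linepath[OF hc[OF that]])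
  have hab: "(h has_contour_integral contour_integral (linepath a b) h) (linepath a b)"
    and hbc: "(h has_contour_integral contour_integral (linepath b c) h) (linepath b c)"
    and hca: "(h has_contour_integral contour_integral (linepath c a) h) (linepath c a)"
    using hi segS znot by (auto intro: has_contour_integral_integral)
  have "(h has_contour_integral (contour_integral (linepath a b) h + (contour_integral (linepath b c) h
          + contour_integral (linepath c a) h))) \<gamma>"
    unfolding \<gamma>_def by (intro has_contour_integral_join hab hbc hca valid_path_join) auto
  then have sumeq: "contour_integral (linepath a b) h + (contour_integral (linepath b c) h
          + contour_integral (linepath c a) h) = 2 * pi * \<i> * exp (- z * of_nat k)"
    using has_contour_integral_unique cauchy wn fz unfolding h_def by fastforce
  have edge: "((\<lambda>s. exp (- linepath u v s * of_nat k) * Wk K t u v s) has_integral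
                contour_integral (linepath u v) h / (2 * pi * \<i>)) {0..1}"
    if "closed_segment u v \<subseteq> S" "z \<notin> closed_segment u v" for u v
  proof -
    have "(h has_contour_integral contour_integral (linepath u v) h) (linepath u v)"
      using hi[OF that] by (rule has_contour_integral_integral)
    then have "((\<lambda>x. h (linepath u v x) * (v - u)) has_integral contour_integral (linepath u v) h) {0..1}"
      by (simp add: has_contour_integral_linepath)
    then have "((\<lambda>x. (1 / (2 * pi * \<i>)) * (h (linepath u v x) * (v - u))) has_integral
                 (1 / (2 * pi * \<i>)) * contour_integral (linepath u v) h) {0..1}"
      by (rule has_integral_mult_right)
    moreover have "(1 / (2 * pi * \<i>)) * (h (linepath u v x) * (v - u)) = exp (- linepath u v x * of_nat k) * Wk K t u v x"
      for x
      by (simp add: h_def f_def Wk_def z_def field_simps)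
    ultimately show ?thesis by simp
  qed
  have e1: "((\<lambda>s. exp (- linepath a b s * of_nat k) * Wk K t a b s) has_integral
                contour_integral (linepath a b) h / (2 * pi * \<i>)) {0..1}"
    and e2: "((\<lambda>s. exp (- linepath b c s * of_nat k) * Wk K t b c s) has_integral
                contour_integral (linepath b c) h / (2 * pi * \<i>)) {0..1}"
    and e3: "((\<lambda>s. exp (- linepath c a s * of_nat k) * Wk K t c a s) has_integral
                contour_integral (linepath c a) h / (2 * pi * \<i>)) {0..1}"
    using edge segS znot by auto
  show "((\<lambda>s. exp (- linepath a b s * of_nat k) * Wk K t a b s) has_integral
            integral {0..1} (\<lambda>s. exp (- linepath a b s * of_nat k) * Wk K t a b s)) {0..1}"
    using e1 by (auto simp: has_integral_integrable_integral)
  show "((\<lambda>s. exp (- linepath b c s * of_nat k) * Wk K t b c s) has_integral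
            integral {0..1} (\<lambda>s. exp (- linepath b c s * of_nat k) * Wk K t b c s)) {0..1}"
    using e2 by (auto simp: has_integral_integrable_integral)
  show "((\<lambda>s. exp (- linepath c a s * of_nat k) * Wk K t c a s) has_integral
            integral {0..1} (\<lambda>s. exp (- linepath c a s * of_nat k) * Wk K t c a s)) {0..1}"
    using e3 by (auto simp: has_integral_integrable_integral)
  show "integral {0..1} (\<lambda>s. exp (- linepath a b s * of_nat k) * Wk K t a b s)
       + integral {0..1} (\<lambda>s. exp (- linepath b c s * of_nat k) * Wk K t b c s)
       + integral {0..1} (\<lambda>s. exp (- linepath c a s * of_nat k) * Wk K t c a s) = exp (- of_real t * of_nat k)"
  proof -
    have "integral {0..1} (\<lambda>s. exp (- linepath a b s * of_nat k) * Wk K t a b s)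
       + integral {0..1} (\<lambda>s. exp (- linepath b c s * of_nat k) * Wk K t b c s)
       + integral {0..1} (\<lambda>s. exp (- linepath c a s * of_nat k) * Wk K t c a s)
       = (contour_integral (linepath a b) h + (contour_integral (linepath b c) h
          + contour_integral (linepath c a) h)) / (2 * pi * \<i>)"
      unfolding integral_unique[OF e1] integral_unique[OF e2] integral_unique[OF e3]
      by (simp add: add_divide_distrib)
    also have "\<dots> = exp (- z * of_nat k)" unfolding sumeq by simp
    finally show ?thesis by (simp add: z_def)
  qed
qed




lemma heat_cont:
  assumes cs: "complex_structure J" and c: "continuous_on T \<gamma>"
  shows "continuous_on T (\<lambda>s. heat J n (\<gamma> s) g A)"
  unfolding heat_def
  by (intro continuous_on_sum continuous_on_cmult[OF cs] continuous_intros c)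

lemma edge_vec:
  fixes J :: "'a::banach \<Rightarrow> 'a" and g :: "nat set \<Rightarrow> 'a" and I :: "nat \<Rightarrow> complex"
  assumes cs: "complex_structure J" and p: "p > 1"
    and Kc: "continuous_on {z. 0 \<le> Re z} K" and uv: "0 \<le> Re u" "0 \<le> Re v"
    and t: "of_real t \<notin> closed_segment u v"
    and hI: "\<And>k. ((\<lambda>s. exp (- linepath u v s * of_nat k) * Wk K t u v s) has_integral I k) {0..1}"
    and E: "\<And>s. s \<in> {0..1} \<Longrightarrow> cmod (Wk K t u v s) * lpnorm p n (heat J n (linepath u v s) g) \<le> E s"
    and Ei: "E integrable_on {0..1}"
  shows "lpnorm p n (\<lambda>A. \<Sum>S\<in>Pow {..<n}. cmult J (I (card S)) (walsh S A *\<^sub>R fourier n g S)) \<le> integral {0..1} E"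
proof -
  define U where "U s A = cmult J (Wk K t u v s) (heat J n (linepath u v s) g A)" for s A
  define V where "V A = (\<Sum>S\<in>Pow {..<n}. cmult J (I (card S)) (walsh S A *\<^sub>R fourier n g S))" for A
  have Ueq: "U s A = (\<Sum>S\<in>Pow {..<n}. cmult J (exp (- linepath u v s * of_nat (card S)) * Wk K t u v s)
                (walsh S A *\<^sub>R fourier n g S))" for s A
    unfolding U_def heat_def cmult_sum_right[OF cs]
    by (intro sum.cong refl) (simp add: cmult_mult[OF cs, symmetric] mult.commute)
  have hU: "((\<lambda>s. U s A) has_integral V A) {0..1}" for A
  proof -
    have "((\<lambda>s. \<Sum>S\<in>Pow {..<n}. cmult J (exp (- linepath u v s * of_nat (card S)) * Wk K t u v s)
                (walsh S A *\<^sub>R fourier n g S)) has_integral V A) {0..1}"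
      unfolding V_def
    proof (rule has_integral_sum)
      fix S
      show "((\<lambda>s. cmult J (exp (- linepath u v s * of_nat (card S)) * Wk K t u v s) (walsh S A *\<^sub>R fourier n g S))
              has_integral cmult J (I (card S)) (walsh S A *\<^sub>R fourier n g S)) {0..1}"
        using has_integral_linear[OF hI[of "card S"] bounded_linear_cmult_left[OF cs, of "walsh S A *\<^sub>R fourier n g S"]]
        by (simp add: comp_def)
    qed simp
    then show ?thesis unfolding Ueq .
  qed
  have Wc: "continuous_on {0..1} (Wk K t u v)" by (rule edge_cont[OF Kc uv t])
  have Uc: "continuous_on {0..1} (\<lambda>s. U s A)" for A
    unfolding U_def by (intro continuous_on_cmult[OF cs] Wc heat_cont[OF cs] continuous_on_linepath)
  have nUi: "(\<lambda>s. norm (U s A)) integrable_on {0..1}" for A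
    by (intro integrable_continuous_interval continuous_intros Uc)
  have bnd: "lpnorm p n (U s) \<le> E s" if "s \<in> {0..1}" for s
  proof -
    have "lpnorm p n (U s) = cmod (Wk K t u v s) * lpnorm p n (heat J n (linepath u v s) g)"
      unfolding U_def by (rule lpnorm_cmult[OF cs]) (use p in auto)
    then show ?thesis using E[OF that] by simp
  qed
  have "lpnorm p n V \<le> integral {0..1} E"
    by (rule lpnorm_integral[OF p hU nUi bnd Ei])
  then show ?thesis unfolding V_def .
qed

lemma contour_bound:
  fixes J :: "'a::banach \<Rightarrow> 'a" and g :: "nat set \<Rightarrow> 'a" and K :: "complex \<Rightarrow> complex"
  assumes cs: "complex_structure J" and p: "p > 1"
    and tri: "tri_ok a b c (of_real t)" and t: "t > 0"
    and Kc: "continuous_on {z. 0 \<le> Re z} K" and Kh: "K holomorphic_on {z. 0 < Re z}"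
    and K1: "K (of_real t) = 1"
    and E1: "\<And>s. s \<in> {0..1} \<Longrightarrow> cmod (Wk K t a b s) * lpnorm p n (heat J n (linepath a b s) g) \<le> E1 s"
    and E1i: "E1 integrable_on {0..1}"
    and E2: "\<And>s. s \<in> {0..1} \<Longrightarrow> cmod (Wk K t b c s) * lpnorm p n (heat J n (linepath b c s) g) \<le> E2 s"
    and E2i: "E2 integrable_on {0..1}"
    and E3: "\<And>s. s \<in> {0..1} \<Longrightarrow> cmod (Wk K t c a s) * lpnorm p n (heat J n (linepath c a s) g) \<le> E3 s"
    and E3i: "E3 integrable_on {0..1}"
  shows "lpnorm p n (heat J n (of_real t) g) \<le> integral {0..1} E1 + integral {0..1} E2 + integral {0..1} E3"
proof -
  define I where "I u v k = integral {0..1} (\<lambda>s. exp (- linepath u v s * of_nat k) * Wk K t u v s)" for u v and k :: nat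
  note sc = scalar_cauchy[OF tri t Kc Kh K1]
  have tri': "0 < Im ((b - a) * cnj (b - of_real t))" "0 < Im ((c - b) * cnj (c - of_real t))"
      "0 < Im ((a - c) * cnj (a - of_real t))" "0 \<le> Re a" "0 \<le> Re b" "0 \<le> Re c"
    using tri by (auto simp: tri_ok_def)
  have znot: "of_real t \<notin> closed_segment a b" "of_real t \<notin> closed_segment b c" "of_real t \<notin> closed_segment c a"
    using notin_segment_Im tri' by blast+
  define V where "V u v A = (\<Sum>S\<in>Pow {..<n}. cmult J (I u v (card S)) (walsh S A *\<^sub>R fourier n g S))" for u v A
  have b1: "lpnorm p n (V a b) \<le> integral {0..1} E1"
    unfolding V_def by (rule edge_vec[OF cs p Kc tri'(4,5) znot(1) _ E1 E1i]) (use sc(1) in \<open>simp add: I_def\<close>)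
  have b2: "lpnorm p n (V b c) \<le> integral {0..1} E2"
    unfolding V_def by (rule edge_vec[OF cs p Kc tri'(5,6) znot(2) _ E2 E2i]) (use sc(2) in \<open>simp add: I_def\<close>)
  have b3: "lpnorm p n (V c a) \<le> integral {0..1} E3"
    unfolding V_def by (rule edge_vec[OF cs p Kc tri'(6,4) znot(3) _ E3 E3i]) (use sc(3) in \<open>simp add: I_def\<close>)
  have heq: "heat J n (of_real t) g A = V a b A + V b c A + V c a A" for A
  proof -
    have "heat J n (of_real t) g A = (\<Sum>S\<in>Pow {..<n}. cmult J (I a b (card S) + I b c (card S) + I c a (card S))
              (walsh S A *\<^sub>R fourier n g S))"
      unfolding heat_def I_def by (intro sum.cong refl) (simp only: sc(4))
    also have "\<dots> = V a b A + V b c A + V c a A"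
      by (simp add: V_def cmult_add_left sum.distrib)
    finally show ?thesis .
  qed
  have "lpnorm p n (heat J n (of_real t) g) = lpnorm p n (\<lambda>A. (V a b A + V b c A) + V c a A)"
    by (rule arg_cong[where f="lpnorm p n"], rule ext, rule heq)
  also have "\<dots> \<le> lpnorm p n (\<lambda>A. V a b A + V b c A) + lpnorm p n (V c a)"
    by (rule lpnorm_triangle[OF p])
  also have "\<dots> \<le> lpnorm p n (V a b) + lpnorm p n (V b c) + lpnorm p n (V c a)"
    using lpnorm_triangle[OF p, of n "V a b" "V b c"] by simp
  finally show ?thesis using b1 b2 b3 by simp
qed




definition Kf :: "real \<Rightarrow> real \<Rightarrow> real \<Rightarrow> complex \<Rightarrow> complex" where
  "Kf lam beta t z = exp (of_real lam * (z powr of_real beta - of_real (t powr beta))) * (2 * of_real t / (z + of_real t))\<^sup>2"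

lemma plus_t_nz: "0 \<le> Re z \<Longrightarrow> t > 0 \<Longrightarrow> z + of_real t \<noteq> 0"
proof
  assume "0 \<le> Re z" "t > 0" "z + of_real t = 0"
  then have "Re (z + of_real t) = 0" by simp
  with \<open>0 \<le> Re z\<close> \<open>t > 0\<close> show False by simp
qed

lemma K_cont:
  assumes "beta > 0" "t > 0"
  shows "continuous_on {z. 0 \<le> Re z} (Kf lam beta t)"
proof -
  have "continuous_on {z. 0 \<le> Re z} (\<lambda>z. z powr of_real beta)"
    by (rule continuous_on_powr_complex) (use assms in \<open>auto intro: continuous_intros\<close>)
  then show ?thesis unfolding Kf_def
    by (intro continuous_intros) (use assms plus_t_nz in auto)
qed

lemma plus_t_nz': "0 < Re z \<Longrightarrow> t > 0 \<Longrightarrow> z + of_real t \<noteq> 0"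
  using plus_t_nz[of z t] by simp

lemma K_holo:
  assumes "t > 0"
  shows "Kf lam beta t holomorphic_on {z. 0 < Re z}"
  unfolding Kf_def
  by (intro holomorphic_intros) (use assms plus_t_nz' in \<open>auto simp: complex_nonpos_Reals_iff\<close>)

lemma K_one:
  assumes "t > 0"
  shows "Kf lam beta t (of_real t) = 1"
  using assms by (simp add: Kf_def powr_of_real)

lemma norm_K:
  assumes "t > 0" "0 \<le> Re z"
  shows "cmod (Kf lam beta t z) = exp (lam * (Re (z powr of_real beta) - t powr beta)) * (4 * t\<^sup>2 / (cmod (z + of_real t))\<^sup>2)"
proof -
  have "cmod (exp (of_real lam * (z powr of_real beta - of_real (t powr beta)))) = exp (lam * (Re (z powr of_real beta) - t powr beta))"
    by (simp add: norm_exp_eq_Re)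
  moreover have "cmod ((2 * of_real t / (z + of_real t))\<^sup>2) = 4 * t\<^sup>2 / (cmod (z + of_real t))\<^sup>2"
    using assms by (simp add: norm_divide norm_power power_divide norm_mult power_mult_distrib)
  ultimately show ?thesis by (simp add: Kf_def norm_mult)
qed

lemma Re_powr_real:
  assumes "z \<noteq> 0"
  shows "Re (z powr of_real beta) = cmod z powr beta * cos (beta * Arg z)"
proof -
  have e: "z powr of_real beta = exp (of_real (beta * ln (cmod z)) + \<i> * of_real (beta * Arg z))"
    using assms by (simp add: powr_def Ln_Arg algebra_simps)
  have "exp (of_real (beta * ln (cmod z)) + \<i> * of_real (beta * Arg z)) = of_real (exp (beta * ln (cmod z))) * cis (beta * Arg z)"
    by (simp only: exp_add cis_conv_exp exp_of_real mult.commute)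
  then have "Re (z powr of_real beta) = exp (beta * ln (cmod z)) * cos (beta * Arg z)"
    unfolding e by simp
  also have "exp (beta * ln (cmod z)) = cmod z powr beta" using assms by (simp add: powr_def)
  finally show ?thesis .
qed

lemma Re_powr_le: "Re (z powr of_real beta) \<le> cmod z powr beta"
proof -
  have "Re (z powr of_real beta) \<le> cmod (z powr of_real beta)" by (rule complex_Re_le_cmod)
  also have "\<dots> = cmod z powr beta" by (simp add: norm_powr_real_powr')
  finally show ?thesis .
qed

lemma cmod_Wk:
  "cmod (Wk K t u v s) = cmod (K (linepath u v s)) * cmod (v - u) / (cmod (linepath u v s - of_real t) * (2 * pi))"
  by (simp add: Wk_def norm_mult norm_divide)

lemma linepath_0_left: "linepath 0 b s = of_real s * b"
  by (simp add: linepath_def scaleR_conv_of_real)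

lemma linepath_0_right: "linepath c 0 s = of_real (1 - s) * c"
  by (simp add: linepath_def scaleR_conv_of_real)




lemma arctan_int:
  fixes t r :: real
  assumes t: "t > 0" and r: "r > 0"
  shows "((\<lambda>s. t * r / (s\<^sup>2 * r\<^sup>2 + t\<^sup>2)) has_integral arctan (r / t)) {0..1}"
proof -
  have "((\<lambda>s. t * r / (s\<^sup>2 * r\<^sup>2 + t\<^sup>2)) has_integral (arctan (1 * r / t) - arctan (0 * r / t))) {0..1}"
  proof (rule fundamental_theorem_of_calculus)
    fix x :: real assume "x \<in> {0..1}"
    have d: "((\<lambda>s. arctan (s * r / t)) has_real_derivative (inverse (1 + (x * r / t)\<^sup>2) * (r / t))) (at x within {0..1})"
      by (rule DERIV_chain2[OF DERIV_arctan]) (use t in \<open>auto intro!: derivative_eq_intros\<close>)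
    have "inverse (1 + (x * r / t)\<^sup>2) * (r / t) = t * r / (x\<^sup>2 * r\<^sup>2 + t\<^sup>2)"
      using t by (simp add: field_simps power2_eq_square)
    with d show "((\<lambda>s. arctan (s * r / t)) has_vector_derivative t * r / (x\<^sup>2 * r\<^sup>2 + t\<^sup>2)) (at x within {0..1})"
      by (simp add: has_real_derivative_iff_has_vector_derivative)
  qed simp
  then show ?thesis by simp
qed

lemma arctan_int_refl:
  fixes t r :: real
  assumes t: "t > 0" and r: "r > 0"
  shows "((\<lambda>s. t * r / ((1 - s)\<^sup>2 * r\<^sup>2 + t\<^sup>2)) has_integral arctan (r / t)) {0..1}"
proof -
  have "((\<lambda>s. t * r / ((1 - s)\<^sup>2 * r\<^sup>2 + t\<^sup>2)) has_integral ((- arctan ((1 - 1) * r / t)) - (- arctan ((1 - 0) * r / t)))) {0..1}"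
  proof (rule fundamental_theorem_of_calculus)
    fix x :: real assume "x \<in> {0..1}"
    have d0: "((\<lambda>s. arctan ((1 - s) * r / t)) has_real_derivative (inverse (1 + ((1 - x) * r / t)\<^sup>2) * (- r / t))) (at x within {0..1})"
      by (rule DERIV_chain2[OF DERIV_arctan]) (use t in \<open>auto intro!: derivative_eq_intros simp: field_simps\<close>)
    have d: "((\<lambda>s. - arctan ((1 - s) * r / t)) has_real_derivative (- (inverse (1 + ((1 - x) * r / t)\<^sup>2) * (- r / t)))) (at x within {0..1})"
      using DERIV_minus[OF d0] .
    have "- (inverse (1 + ((1 - x) * r / t)\<^sup>2) * (- r / t)) = t * r / ((1 - x)\<^sup>2 * r\<^sup>2 + t\<^sup>2)"
      using t by (simp add: field_simps power2_eq_square)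
    with d show "((\<lambda>s. - arctan ((1 - s) * r / t)) has_vector_derivative t * r / ((1 - x)\<^sup>2 * r\<^sup>2 + t\<^sup>2)) (at x within {0..1})"
      by (simp add: has_real_derivative_iff_has_vector_derivative)
  qed simp
  then show ?thesis by simp
qed

lemma arctan_int_sym:
  fixes t Y :: real
  assumes t: "t > 0" and Y: "Y > 0"
  shows "((\<lambda>s. t * Y / (t\<^sup>2 + Y\<^sup>2 * (1 - 2 * s)\<^sup>2)) has_integral arctan (Y / t)) {0..1}"
proof -
  have "((\<lambda>s. t * Y / (t\<^sup>2 + Y\<^sup>2 * (1 - 2 * s)\<^sup>2)) has_integral
          ((- arctan (Y * (1 - 2 * 1) / t) / 2) - (- arctan (Y * (1 - 2 * 0) / t) / 2))) {0..1}"
  proof (rule fundamental_theorem_of_calculus)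
    fix x :: real assume "x \<in> {0..1}"
    have d0: "((\<lambda>s. arctan (Y * (1 - 2 * s) / t)) has_real_derivative
              (inverse (1 + (Y * (1 - 2 * x) / t)\<^sup>2) * (- 2 * Y / t))) (at x within {0..1})"
      by (rule DERIV_chain2[OF DERIV_arctan]) (use t in \<open>auto intro!: derivative_eq_intros simp: field_simps\<close>)
    have d: "((\<lambda>s. - arctan (Y * (1 - 2 * s) / t) / 2) has_real_derivative
              (- (inverse (1 + (Y * (1 - 2 * x) / t)\<^sup>2) * (- 2 * Y / t)) / 2)) (at x within {0..1})"
      using DERIV_cdivide[OF DERIV_minus[OF d0], of 2] .
    have pos: "t\<^sup>2 + Y\<^sup>2 * (1 - 2 * x)\<^sup>2 > 0" using t by (simp add: add_pos_nonneg)
    have e1: "1 + (Y * (1 - 2 * x) / t)\<^sup>2 = (t\<^sup>2 + Y\<^sup>2 * (1 - 2 * x)\<^sup>2) / t\<^sup>2"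
    proof -
      have "(Y * (1 - 2 * x) / t)\<^sup>2 = Y\<^sup>2 * (1 - 2 * x)\<^sup>2 / t\<^sup>2" by (simp only: power_divide power_mult_distrib)
      then show ?thesis using t by (simp add: field_simps)
    qed
    have "- (inverse (1 + (Y * (1 - 2 * x) / t)\<^sup>2) * (- 2 * Y / t)) / 2 = t * Y / (t\<^sup>2 + Y\<^sup>2 * (1 - 2 * x)\<^sup>2)"
      unfolding e1 using t pos by (simp add: field_simps power2_eq_square)
    with d show "((\<lambda>s. - arctan (Y * (1 - 2 * s) / t) / 2) has_vector_derivative t * Y / (t\<^sup>2 + Y\<^sup>2 * (1 - 2 * x)\<^sup>2)) (at x within {0..1})"
      by (simp add: has_real_derivative_iff_has_vector_derivative)
  qed simp
  then show ?thesis by (simp add: arctan_minus)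
qed

lemma exp_int:
  fixes tau T :: real
  assumes tau: "tau > 0" and T: "T \<ge> 0"
  shows "((\<lambda>t. exp (1 - t / tau)) has_integral (tau * exp 1 - tau * exp (1 - T / tau))) {0..T}"
proof -
  have "((\<lambda>t. exp (1 - t / tau)) has_integral ((- tau * exp (1 - T / tau)) - (- tau * exp (1 - 0 / tau)))) {0..T}"
  proof (rule fundamental_theorem_of_calculus)
    fix x :: real assume "x \<in> {0..T}"
    have d0: "((\<lambda>t. exp (1 - t / tau)) has_real_derivative (exp (1 - x / tau) * (- 1 / tau))) (at x within {0..T})"
      by (rule DERIV_chain2[OF DERIV_exp]) (use tau in \<open>auto intro!: derivative_eq_intros simp: field_simps\<close>)
    have d: "((\<lambda>t. - tau * exp (1 - t / tau)) has_real_derivative (- tau * (exp (1 - x / tau) * (- 1 / tau)))) (at x within {0..T})"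
      using DERIV_cmult[OF d0, of "- tau"] .
    then show "((\<lambda>t. - tau * exp (1 - t / tau)) has_vector_derivative exp (1 - x / tau)) (at x within {0..T})"
      using tau by (simp add: has_real_derivative_iff_has_vector_derivative)
  qed (use T in simp)
  then show ?thesis by simp
qed

lemma expk_int:
  fixes T :: real and k :: nat
  assumes T: "T \<ge> 0"
  shows "((\<lambda>t. exp (- t * real k) * real k) has_integral (1 - exp (- T * real k))) {0..T}"
proof -
  have "((\<lambda>t. exp (- t * real k) * real k) has_integral ((- exp (- T * real k)) - (- exp (- 0 * real k)))) {0..T}"
  proof (rule fundamental_theorem_of_calculus)
    fix x :: real assume "x \<in> {0..T}"
    have d: "((\<lambda>t. - exp (- t * real k)) has_real_derivative (- (exp (- x * real k) * (- real k)))) (at x within {0..T})"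
      by (intro derivative_intros DERIV_chain2[OF DERIV_exp]) (auto intro!: derivative_eq_intros)
    then show "((\<lambda>t. - exp (- t * real k)) has_vector_derivative exp (- x * real k) * real k) (at x within {0..T})"
      by (simp add: has_real_derivative_iff_has_vector_derivative)
  qed (use T in simp)
  then show ?thesis by simp
qed




lemma ray_bound:
  fixes t u rho th phi beta lam :: real
  assumes t: "t > 0" and u: "0 \<le> u" "u \<le> 1" and rho: "rho > 0"
    and phi: "phi = th \<or> phi = - th" and th: "0 < th" "th < pi / 2" and bt: "beta * th = pi / 2"
  shows "cmod (Kf lam beta t (of_real u * rcis rho phi)) * rho / (cmod (of_real u * rcis rho phi - of_real t) * (2 * pi))
          \<le> exp (- lam * t powr beta) * (2 / (pi * sin th)) * (t * rho / (u\<^sup>2 * rho\<^sup>2 + t\<^sup>2))"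
proof -
  define z where "z = of_real u * rcis rho phi"
  have c: "cos phi = cos th" "(sin phi)\<^sup>2 = (sin th)\<^sup>2" using phi by auto
  have s0: "sin th > 0" using th by (intro sin_gt_zero) auto
  have c0: "cos th > 0" using th by (intro cos_gt_zero) auto
  have Rez: "Re z = u * rho * cos th" by (simp add: z_def c)
  have Imz2: "(Im z)\<^sup>2 = u\<^sup>2 * rho\<^sup>2 * (sin th)\<^sup>2" by (simp add: z_def c power_mult_distrib)
  have Rez0: "0 \<le> Re z" unfolding Rez using u rho c0 by simp
  have sc: "(sin th)\<^sup>2 + (cos th)\<^sup>2 = 1" by (rule sin_cos_squared_add)
  have Repow: "Re (z powr of_real beta) = 0"
  proof (cases "u = 0")
    case True then show ?thesis by (simp add: z_def)
  next
    case False
    then have up: "u > 0" using u by simp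
    have "z \<noteq> 0" using up rho by (simp add: z_def rcis_def)
    moreover have "Arg z = phi"
    proof -
      have "Arg z = Arg (rcis rho phi)" unfolding z_def using up by simp
      also have "\<dots> = phi" by (rule Arg_rcis) (use phi th rho in auto)
      finally show ?thesis .
    qed
    moreover have "cos (beta * phi) = 0"
    proof -
      have "cos (beta * th) = 0" unfolding bt by simp
      then show ?thesis using phi by auto
    qed
    ultimately show ?thesis by (simp add: Re_powr_real)
  qed
  have K: "cmod (Kf lam beta t z) = exp (- lam * t powr beta) * (4 * t\<^sup>2 / (cmod (z + of_real t))\<^sup>2)"
    using norm_K[OF t Rez0] Repow by simp
  have RI: "(Re z)\<^sup>2 + (Im z)\<^sup>2 = u\<^sup>2 * rho\<^sup>2"
    unfolding Rez Imz2 using sc by algebra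
  have tt: "t\<^sup>2 = (t * cos th)\<^sup>2 + (t * sin th)\<^sup>2"
    using sc by algebra
  have A: "(cmod (z + of_real t))\<^sup>2 \<ge> u\<^sup>2 * rho\<^sup>2 + t\<^sup>2"
  proof -
    have "(cmod (z + of_real t))\<^sup>2 = (Re z + t)\<^sup>2 + (Im z)\<^sup>2" by (simp add: cmod_power2)
    also have "\<dots> = ((Re z)\<^sup>2 + (Im z)\<^sup>2) + 2 * t * Re z + t\<^sup>2"
      by (simp add: power2_eq_square algebra_simps)
    finally show ?thesis using Rez0 t RI by simp
  qed
  have B: "cmod (z - of_real t) \<ge> t * sin th"
  proof -
    have "(cmod (z - of_real t))\<^sup>2 = (Re z - t)\<^sup>2 + (Im z)\<^sup>2" by (simp add: cmod_power2)
    also have "\<dots> = ((Re z)\<^sup>2 + (Im z)\<^sup>2) - 2 * t * Re z + t\<^sup>2"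
      by (simp add: power2_eq_square algebra_simps)
    also have "\<dots> = (u * rho - t * cos th)\<^sup>2 + (t * sin th)\<^sup>2"
      using RI Rez tt by algebra
    finally have "(t * sin th)\<^sup>2 \<le> (cmod (z - of_real t))\<^sup>2" by simp
    then show ?thesis using t s0 by (simp add: abs_le_square_iff[symmetric] power2_le_iff_abs_le)
  qed
  define D where "D = u\<^sup>2 * rho\<^sup>2 + t\<^sup>2"
  have D: "D > 0" using t by (simp add: D_def add_nonneg_pos)
  have ts: "t * sin th > 0" using t s0 by simp
  have "cmod (Kf lam beta t z) * rho / (cmod (z - of_real t) * (2 * pi))
      = exp (- lam * t powr beta) * (4 * t\<^sup>2 * rho) / ((cmod (z + of_real t))\<^sup>2 * cmod (z - of_real t) * (2 * pi))"
    unfolding K by (simp add: field_simps)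
  also have "\<dots> \<le> exp (- lam * t powr beta) * (4 * t\<^sup>2 * rho) / (D * (t * sin th) * (2 * pi))"
  proof (rule divide_left_mono)
    show "D * (t * sin th) * (2 * pi) \<le> (cmod (z + of_real t))\<^sup>2 * cmod (z - of_real t) * (2 * pi)"
      using A B D ts unfolding D_def by (intro mult_right_mono mult_mono) auto
    show "0 \<le> exp (- lam * t powr beta) * (4 * t\<^sup>2 * rho)" using rho by simp
    show "0 < (cmod (z + of_real t))\<^sup>2 * cmod (z - of_real t) * (2 * pi) * (D * (t * sin th) * (2 * pi))"
    proof -
      have p1: "(cmod (z + of_real t))\<^sup>2 > 0" using A D unfolding D_def by linarith
      have p2: "cmod (z - of_real t) > 0" using B ts by linarith
      show ?thesis by (intro mult_pos_pos p1 p2 D ts) simp_all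
    qed
  qed
  also have "\<dots> = exp (- lam * t powr beta) * (2 / (pi * sin th)) * (t * rho / D)"
    using t s0 D by (simp add: field_simps power2_eq_square)
  finally show ?thesis by (simp add: z_def D_def)
qed




definition Tc :: "real \<Rightarrow> real \<Rightarrow> real" where
  "Tc \<alpha> M = R1 \<alpha> + 1 + ln (4 * M)"

lemma Tc_ge: "0 < \<alpha> \<Longrightarrow> \<alpha> \<le> 1 \<Longrightarrow> 1 \<le> M \<Longrightarrow> Tc \<alpha> M \<ge> R1 \<alpha> + 1"
  unfolding Tc_def by simp

lemma R1_ge: "0 < \<alpha> \<Longrightarrow> \<alpha> \<le> 1 \<Longrightarrow> R1 \<alpha> \<ge> 1"
  using R0_nonneg by (simp add: R1_def)

lemma sector_ray:
  assumes "0 \<le> u" "rho > 0" "\<bar>phi\<bar> \<le> \<alpha> * pi / 2" "\<alpha> * pi / 2 < pi" "0 < \<alpha>"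
  shows "of_real u * rcis rho phi \<in> sector \<alpha>"
proof (cases "u = 0")
  case True then show ?thesis using assms by (simp add: sector_def Arg_zero)
next
  case False
  then have "u > 0" using assms by simp
  have h: "\<bar>phi\<bar> < pi" using assms(3) assms(4) by linarith
  have ph: "phi \<in> {-pi<..pi}" using h by (auto simp: abs_less_iff)
  have "Arg (rcis rho phi) = phi" by (rule Arg_rcis[OF ph]) (use assms in auto)
  then have "Arg (of_real u * rcis rho phi) = phi"
    using \<open>u > 0\<close> by simp
  then show ?thesis using assms by (simp add: sector_def)
qed

lemma case_lt1:
  fixes J :: "'a::banach \<Rightarrow> 'a"
  assumes cs: "complex_structure J" and p: "1 < p" and a: "0 < \<alpha>" "\<alpha> < 1" and M: "1 \<le> M"
  shows "\<exists>C \<kappa>. 1 \<le> C \<and> 0 < \<kappa> \<and> (\<forall>n (g::nat set \<Rightarrow> 'a) d t.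
           (\<forall>z\<in>sector \<alpha>. lpnorm p n (heat J n z g) \<le> M * lpnorm p n g) \<longrightarrow>
           (\<forall>S\<subseteq>{..<n}. card S \<le> d \<longrightarrow> fourier n g S = 0) \<longrightarrow> 0 < t \<longrightarrow> t \<le> Tc \<alpha> M \<longrightarrow>
           lpnorm p n (heat J n (of_real t) g) \<le> C * M * lpnorm p n g * exp (- (\<kappa> * real (d+1)) * t powr (1/\<alpha>)))"
proof -
  define th where "th = \<alpha> * pi / 2"
  define s0 where "s0 = sin th"
  define c0 where "c0 = cos th"
  define T where "T = Tc \<alpha> M"
  define R where "R = 2 * T"
  define rho where "rho = R / c0"
  define Y where "Y = rho * s0"
  define beta where "beta = 1 / \<alpha>"
  define \<kappa> where "\<kappa> = 1 / (2 * rho powr beta)"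
  define C where "C = 2 / s0 + 4 * s0 / (pi * c0) + 1"
  have a1: "\<alpha> \<le> 1" using a by simp
  have th: "0 < th" "th < pi / 2" using a by (auto simp: th_def)
  have s0: "s0 > 0" unfolding s0_def using th by (intro sin_gt_zero) auto
  have c0: "c0 > 0" unfolding c0_def using th by (intro cos_gt_zero) auto
  have sc: "s0\<^sup>2 + c0\<^sup>2 = 1" by (simp add: s0_def c0_def)
  have R1: "R1 \<alpha> \<ge> 1" by (rule R1_ge[OF a(1) a1])
  have T: "T \<ge> R1 \<alpha> + 1" unfolding T_def by (rule Tc_ge[OF a(1) a1 M])
  have R: "R > 0" "R \<ge> R1 \<alpha> + 1" "R - R1 \<alpha> \<ge> 1" using T R1 by (auto simp: R_def)
  have rho: "rho > 0" "rho * c0 = R" using R c0 by (auto simp: rho_def)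
  have Y: "Y > 0" using rho s0 by (simp add: Y_def)
  have RY: "R\<^sup>2 + Y\<^sup>2 = rho\<^sup>2" unfolding Y_def rho(2)[symmetric] using sc by algebra
  have beta: "beta > 0" "beta * th = pi / 2" using a by (auto simp: beta_def th_def)
  have kap: "\<kappa> > 0" using rho by (simp add: \<kappa>_def)
  have C: "1 \<le> C" using s0 c0 by (simp add: C_def)
  show ?thesis
  proof (intro exI conjI allI impI)
    show "1 \<le> C" by (rule C)
    show "0 < \<kappa>" by (rule kap)
    fix n and g :: "nat set \<Rightarrow> 'a" and d and t :: real
    assume hyp: "\<forall>z\<in>sector \<alpha>. lpnorm p n (heat J n z g) \<le> M * lpnorm p n g"
      and tail: "\<forall>S\<subseteq>{..<n}. card S \<le> d \<longrightarrow> fourier n g S = 0" and t: "0 < t" "t \<le> Tc \<alpha> M"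
    have tR: "2 * t \<le> R" "t < R" using t R by (auto simp: R_def T_def)
    define lam where "lam = \<kappa> * real (d + 1)"
    have lam: "lam \<ge> 0" using kap by (simp add: lam_def)
    have lamrho: "lam * rho powr beta = real (d + 1) / 2" using rho by (simp add: lam_def \<kappa>_def)
    define G where "G = M * lpnorm p n g * exp (- lam * t powr beta)"
    have G: "G \<ge> 0" using M by (simp add: G_def lpnorm_nonneg)
    define K where "K = Kf lam beta t"
    define b where "b = rcis rho (- th)"
    define c where "c = rcis rho th"
    have bc: "Re b = R" "Im b = - Y" "Re c = R" "Im c = Y"
      using rho by (auto simp: b_def c_def c0_def s0_def Y_def)
    have tri: "tri_ok 0 b c (of_real t)"
      unfolding tri_ok_def using bc t tR Y R by (simp add: algebra_simps)
    have Mg: "M * lpnorm p n g \<ge> 0" using M by (simp add: lpnorm_nonneg)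
    define E1 where "E1 s = G * (2 / (pi * s0)) * (t * rho / (s\<^sup>2 * rho\<^sup>2 + t\<^sup>2))" for s
    have e1: "cmod (Wk K t 0 b s) * lpnorm p n (heat J n (linepath 0 b s) g) \<le> E1 s" if s: "s \<in> {0..1}" for s
    proof -
      have eq: "cmod (Wk K t 0 b s) = cmod (Kf lam beta t (of_real s * rcis rho (- th))) * rho /
                 (cmod (of_real s * rcis rho (- th) - of_real t) * (2 * pi))"
        unfolding cmod_Wk linepath_0_left diff_zero K_def b_def complex_mod_rcis abs_of_pos[OF rho(1)] ..
      have W: "cmod (Wk K t 0 b s) \<le> exp (- lam * t powr beta) * (2 / (pi * s0)) * (t * rho / (s\<^sup>2 * rho\<^sup>2 + t\<^sup>2))"
        unfolding eq s0_def by (rule ray_bound[OF t(1) _ _ rho(1) _ th beta(2)]) (use s in auto)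
      have zin: "linepath 0 b s \<in> sector \<alpha>"
        unfolding linepath_0_left b_def by (rule sector_ray) (use s rho th a in \<open>auto simp: th_def\<close>)
      have L: "lpnorm p n (heat J n (linepath 0 b s) g) \<le> M * lpnorm p n g"
        using hyp zin by blast
      have "cmod (Wk K t 0 b s) * lpnorm p n (heat J n (linepath 0 b s) g)
          \<le> (exp (- lam * t powr beta) * (2 / (pi * s0)) * (t * rho / (s\<^sup>2 * rho\<^sup>2 + t\<^sup>2))) * (M * lpnorm p n g)"
        by (rule mult_mono[OF W L]) (use s0 t rho in \<open>auto intro!: mult_nonneg_nonneg divide_nonneg_nonneg lpnorm_nonneg\<close>)
      also have "\<dots> = E1 s" by (simp add: E1_def G_def)
      finally show ?thesis .
    qed
    have E1i: "(E1 has_integral (G * (2 / (pi * s0)) * arctan (rho / t))) {0..1}"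
      unfolding E1_def by (rule has_integral_mult_right[OF arctan_int[OF t(1) rho(1)]])
    define E3 where "E3 s = G * (2 / (pi * s0)) * (t * rho / ((1 - s)\<^sup>2 * rho\<^sup>2 + t\<^sup>2))" for s
    have e3: "cmod (Wk K t c 0 s) * lpnorm p n (heat J n (linepath c 0 s) g) \<le> E3 s" if s: "s \<in> {0..1}" for s
    proof -
      have eq: "cmod (Wk K t c 0 s) = cmod (Kf lam beta t (of_real (1 - s) * rcis rho th)) * rho /
                 (cmod (of_real (1 - s) * rcis rho th - of_real t) * (2 * pi))"
        unfolding cmod_Wk linepath_0_right K_def c_def norm_minus_commute[of 0] diff_zero complex_mod_rcis abs_of_pos[OF rho(1)] ..
      have W: "cmod (Wk K t c 0 s) \<le> exp (- lam * t powr beta) * (2 / (pi * s0)) * (t * rho / ((1 - s)\<^sup>2 * rho\<^sup>2 + t\<^sup>2))"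
        unfolding eq s0_def by (rule ray_bound[OF t(1) _ _ rho(1) _ th beta(2)]) (use s in auto)
      have zin: "linepath c 0 s \<in> sector \<alpha>"
        unfolding linepath_0_right c_def by (rule sector_ray) (use s rho th a in \<open>auto simp: th_def\<close>)
      have L: "lpnorm p n (heat J n (linepath c 0 s) g) \<le> M * lpnorm p n g"
        using hyp zin by blast
      have "cmod (Wk K t c 0 s) * lpnorm p n (heat J n (linepath c 0 s) g)
          \<le> (exp (- lam * t powr beta) * (2 / (pi * s0)) * (t * rho / ((1 - s)\<^sup>2 * rho\<^sup>2 + t\<^sup>2))) * (M * lpnorm p n g)"
        by (rule mult_mono[OF W L]) (use s0 t rho in \<open>auto intro!: mult_nonneg_nonneg divide_nonneg_nonneg lpnorm_nonneg\<close>)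
      also have "\<dots> = E3 s" by (simp add: E3_def G_def)
      finally show ?thesis .
    qed
    have E3i: "(E3 has_integral (G * (2 / (pi * s0)) * arctan (rho / t))) {0..1}"
      unfolding E3_def by (rule has_integral_mult_right[OF arctan_int_refl[OF t(1) rho(1)]])
    define E2 where "E2 s = G * (4 * Y / (pi * R))" for s :: real
    have e2: "cmod (Wk K t b c s) * lpnorm p n (heat J n (linepath b c s) g) \<le> E2 s" if s: "s \<in> {0..1}" for s
    proof -
      define z where "z = linepath b c s"
      have Rez: "Re z = R" and Imz: "Im z = (2 * s - 1) * Y"
        using bc by (auto simp: z_def linepath_def algebra_simps)
      have z0: "0 \<le> Re z" using Rez R by simp
      have "(cmod z)\<^sup>2 = R\<^sup>2 + ((2 * s - 1) * Y)\<^sup>2" by (simp add: cmod_power2 Rez Imz)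
      also have "\<dots> \<le> R\<^sup>2 + Y\<^sup>2"
      proof -
        have "\<bar>2 * s - 1\<bar> \<le> 1" using s by auto
        then have "\<bar>2 * s - 1\<bar> * Y \<le> 1 * Y" using Y by (intro mult_right_mono) auto
        then have "(\<bar>2 * s - 1\<bar> * Y)\<^sup>2 \<le> (1 * Y)\<^sup>2" using Y by (intro power_mono) auto
        then have "((2 * s - 1) * Y)\<^sup>2 \<le> (1 * Y)\<^sup>2" by (simp add: power_mult_distrib)
        then show ?thesis by simp
      qed
      finally have "(cmod z)\<^sup>2 \<le> rho\<^sup>2" using RY by simp
      then have zr: "cmod z \<le> rho" using rho by (simp add: power2_le_iff_abs_le)
      have Rep: "Re (z powr of_real beta) \<le> rho powr beta"
        using Re_powr_le[of z beta] powr_mono2[of beta "cmod z" rho] zr beta by simp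
      have zt1: "cmod (z + of_real t) \<ge> R" using complex_Re_le_cmod[of "z + of_real t"] Rez t by simp
      have zt2: "cmod (z - of_real t) \<ge> R / 2" using complex_Re_le_cmod[of "z - of_real t"] Rez tR by simp
      have cb: "cmod (c - b) = 2 * Y" 
      proof -
        have "c - b = Complex 0 (2 * Y)" using bc by (simp add: complex_eq_iff)
        then show ?thesis using Y by (simp add: cmod_def real_sqrt_mult)
      qed
      have Kb: "cmod (K z) \<le> exp (lam * (rho powr beta - t powr beta))"
      proof -
        have "cmod (K z) = exp (lam * (Re (z powr of_real beta) - t powr beta)) * (4 * t\<^sup>2 / (cmod (z + of_real t))\<^sup>2)"
          unfolding K_def by (rule norm_K[OF t(1) z0])
        also have "\<dots> \<le> exp (lam * (rho powr beta - t powr beta)) * 1"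
        proof (rule mult_mono)
          show "exp (lam * (Re (z powr of_real beta) - t powr beta)) \<le> exp (lam * (rho powr beta - t powr beta))"
            using Rep lam by (simp add: mult_left_mono)
          have "(2 * t)\<^sup>2 \<le> R\<^sup>2" using tR t by (intro power_mono) auto
          also have "R\<^sup>2 \<le> (cmod (z + of_real t))\<^sup>2" using zt1 R by (intro power_mono) auto
          finally show "4 * t\<^sup>2 / (cmod (z + of_real t))\<^sup>2 \<le> 1"
            using R zt1 by (simp add: power_mult_distrib divide_le_eq)
        qed auto
        finally show ?thesis by simp
      qed
      have W: "cmod (Wk K t b c s) \<le> exp (lam * (rho powr beta - t powr beta)) * (2 * Y / (pi * R))"
      proof -
        have "cmod (Wk K t b c s) = cmod (K z) * (2 * Y) / (cmod (z - of_real t) * (2 * pi))"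
          by (simp add: cmod_Wk z_def cb)
        also have "\<dots> \<le> exp (lam * (rho powr beta - t powr beta)) * (2 * Y) / ((R / 2) * (2 * pi))"
          by (intro frac_le mult_right_mono Kb mult_nonneg_nonneg) (use Y R zt2 in auto)
        also have "\<dots> = exp (lam * (rho powr beta - t powr beta)) * (2 * Y / (pi * R))"
          using R by (simp add: field_simps)
        finally show ?thesis .
      qed
      have L: "lpnorm p n (heat J n z g) \<le> 2 * M * lpnorm p n g * exp (- (Re z - R1 \<alpha>) * real (d + 1))"
        by (rule decay[OF cs p a(1) a1 hyp _ tail]) (use M Rez R in auto)
      have "cmod (Wk K t b c s) * lpnorm p n (heat J n z g)
          \<le> (exp (lam * (rho powr beta - t powr beta)) * (2 * Y / (pi * R))) * (2 * M * lpnorm p n g * exp (- (R - R1 \<alpha>) * real (d + 1)))"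
        by (rule mult_mono[OF W]) (use L Rez Y R in \<open>auto simp: lpnorm_nonneg\<close>)
      also have "\<dots> = G * (4 * Y / (pi * R)) * exp (lam * rho powr beta - (R - R1 \<alpha>) * real (d + 1))"
        by (simp add: G_def exp_add[symmetric] exp_diff field_simps)
      also have "\<dots> \<le> G * (4 * Y / (pi * R)) * 1"
      proof (rule mult_left_mono)
        have "(R - R1 \<alpha>) * real (d + 1) \<ge> 1 * real (d + 1)" using R by (intro mult_right_mono) auto
        then show "exp (lam * rho powr beta - (R - R1 \<alpha>) * real (d + 1)) \<le> 1" unfolding lamrho by simp
      qed (use G Y R in auto)
      finally show ?thesis by (simp add: E2_def z_def)
    qed
    have E2i: "(E2 has_integral (G * (4 * Y / (pi * R)))) {0..1}"
      unfolding E2_def using has_integral_const_real[of "G * (4 * Y / (pi * R))" 0 1] by simp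
    have main: "lpnorm p n (heat J n (of_real t) g) \<le> integral {0..1} E1 + integral {0..1} E2 + integral {0..1} E3"
      by (rule contour_bound[OF cs p tri t(1) K_cont[OF beta(1) t(1), where lam=lam] K_holo[OF t(1), where lam=lam and beta=beta] K_one[OF t(1), where lam=lam and beta=beta], folded K_def])
         (use e1 e2 e3 E1i E2i E3i in auto)
    have at: "arctan (rho / t) \<le> pi / 2" using arctan_ubound[of "rho / t"] by simp
    have i1: "integral {0..1} E1 \<le> G / s0"
    proof -
      have "integral {0..1} E1 = G * (2 / (pi * s0)) * arctan (rho / t)" using E1i by (rule integral_unique)
      also have "\<dots> \<le> G * (2 / (pi * s0)) * (pi / 2)" using at G s0 by (intro mult_left_mono) auto
      finally show ?thesis using s0 by (simp add: field_simps)
    qed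
    have i3: "integral {0..1} E3 \<le> G / s0"
    proof -
      have "integral {0..1} E3 = G * (2 / (pi * s0)) * arctan (rho / t)" using E3i by (rule integral_unique)
      also have "\<dots> \<le> G * (2 / (pi * s0)) * (pi / 2)" using at G s0 by (intro mult_left_mono) auto
      finally show ?thesis using s0 by (simp add: field_simps)
    qed
    have i2: "integral {0..1} E2 = G * (4 * s0 / (pi * c0))"
      using integral_unique[OF E2i] rho c0 by (simp add: Y_def rho_def field_simps)
    have "lpnorm p n (heat J n (of_real t) g) \<le> G / s0 + G * (4 * s0 / (pi * c0)) + G / s0"
      using main i1 i2 i3 by simp
    also have "\<dots> = G * (2 / s0 + 4 * s0 / (pi * c0))" by (simp add: field_simps)
    also have "\<dots> \<le> G * C" using G by (intro mult_left_mono) (auto simp: C_def)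
    also have "\<dots> = C * M * lpnorm p n g * exp (- (\<kappa> * real (d+1)) * t powr (1/\<alpha>))"
      by (simp add: G_def lam_def beta_def)
    finally show "lpnorm p n (heat J n (of_real t) g) \<le> C * M * lpnorm p n g * exp (- (\<kappa> * real (d+1)) * t powr (1/\<alpha>))" .
  qed
qed




lemma R0_one: "R0 1 = 0" by (simp add: R0_def)
lemma R1_one: "R1 1 = 1" by (simp add: R1_def R0_one)

lemma sector_one: "0 \<le> Re z \<Longrightarrow> z \<in> sector 1"
  using Arg_Re_nonneg[of z] by (simp add: sector_def)

lemma norm_K1:
  assumes "t > 0" "0 \<le> Re z"
  shows "cmod (Kf lam 1 t z) = exp (lam * (Re z - t)) * (4 * t\<^sup>2 / (cmod (z + of_real t))\<^sup>2)"
  using norm_K[OF assms, of lam 1] assms by simp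

lemma side_bound:
  fixes J :: "'a::banach \<Rightarrow> 'a" and g :: "nat set \<Rightarrow> 'a"
  assumes cs: "complex_structure J" and p: "1 < p"
    and hyp: "\<forall>z\<in>sector 1. lpnorm p n (heat J n z g) \<le> M * lpnorm p n g" and M: "1 \<le> M"
    and tail: "\<forall>S\<subseteq>{..<n}. card S \<le> d \<longrightarrow> fourier n g S = 0"
    and t: "t > 0" and lam: "lam = real (d + 1) / 2" and Y: "Y = 8 * t * exp lam"
    and z: "0 \<le> Re z" "Y\<^sup>2 / 2 \<le> (cmod z)\<^sup>2" and L: "0 \<le> L" "L \<le> 2 * Y"
  shows "cmod (Kf lam 1 t z) * L / (cmod (z - of_real t) * (2 * pi)) * lpnorm p n (heat J n z g)
          \<le> M * lpnorm p n g * exp (- lam * t)"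
proof -
  have Ypos: "Y > 0" using t by (simp add: Y)
  have lam0: "lam \<ge> 0" by (simp add: lam)
  have Yt: "t \<le> Y / 8" using lam0 t by (simp add: Y)
  have z7: "cmod z \<ge> 7 / 10 * Y"
  proof -
    have e: "(7 / 10 * Y)\<^sup>2 = 49 / 100 * Y\<^sup>2" by (simp add: power2_eq_square)
    have "(7 / 10 * Y)\<^sup>2 \<le> (cmod z)\<^sup>2" unfolding e using z(2) zero_le_power2[of "cmod z"] by linarith
    then show ?thesis using Ypos by (simp add: power2_le_iff_abs_le)
  qed
  have zt: "cmod (z - of_real t) \<ge> Y / 2"
  proof -
    have "cmod z \<le> cmod (of_real t :: complex) + cmod (z - of_real t)" by (rule norm_triangle_sub)
    then show ?thesis using z7 Yt t by simp
  qed
  have zp: "(cmod (z + of_real t))\<^sup>2 \<ge> Y\<^sup>2 / 2"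
  proof -
    have "(cmod (z + of_real t))\<^sup>2 = (Re z + t)\<^sup>2 + (Im z)\<^sup>2" by (simp add: cmod_power2)
    also have "\<dots> \<ge> (Re z)\<^sup>2 + (Im z)\<^sup>2" using z(1) t by (intro add_right_mono power_mono) auto
    finally show ?thesis using z(2) by (simp add: cmod_power2)
  qed
  have Kb: "cmod (Kf lam 1 t z) \<le> exp (lam * (Re z - t)) * (8 * t\<^sup>2 / Y\<^sup>2)"
  proof -
    have "4 * t\<^sup>2 / (cmod (z + of_real t))\<^sup>2 \<le> 4 * t\<^sup>2 / (Y\<^sup>2 / 2)"
      by (rule divide_left_mono[OF zp]) (use Ypos zp in \<open>auto intro!: mult_pos_pos\<close>)
    then show ?thesis unfolding norm_K1[OF t z(1)] by (intro mult_left_mono) (auto simp: field_simps)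
  qed
  have W: "cmod (Kf lam 1 t z) * L / (cmod (z - of_real t) * (2 * pi)) \<le> exp (lam * (Re z - t)) * (16 * t\<^sup>2 / (pi * Y\<^sup>2))"
  proof -
    have "cmod (Kf lam 1 t z) * L / (cmod (z - of_real t) * (2 * pi)) \<le> exp (lam * (Re z - t)) * (8 * t\<^sup>2 / Y\<^sup>2) * (2 * Y) / ((Y / 2) * (2 * pi))"
      by (intro frac_le mult_mono Kb L mult_right_mono zt) (use Ypos in auto)
    also have "\<dots> = exp (lam * (Re z - t)) * (16 * t\<^sup>2 / (pi * Y\<^sup>2))" using Ypos by (simp add: field_simps power2_eq_square)
    finally show ?thesis .
  qed
  have ee: "exp lam * exp lam = exp (2 * lam)" by (simp add: exp_add[symmetric])
  have Y2: "Y\<^sup>2 = 64 * t\<^sup>2 * exp (2 * lam)" unfolding Y ee[symmetric] by (simp add: power2_eq_square)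
  have key: "exp (lam * Re z) * lpnorm p n (heat J n z g) \<le> 2 * exp (2 * lam) * (M * lpnorm p n g)"
  proof (cases "Re z \<ge> 2")
    case True
    have "lpnorm p n (heat J n z g) \<le> 2 * M * lpnorm p n g * exp (- (Re z - R1 1) * real (d + 1))"
      by (rule decay[OF cs p _ _ hyp _ tail]) (use M True in \<open>auto simp: R1_one\<close>)
    then have "exp (lam * Re z) * lpnorm p n (heat J n z g) \<le> exp (lam * Re z) * (2 * M * lpnorm p n g * exp (- (Re z - 1) * real (d + 1)))"
      by (simp add: R1_one)
    also have "\<dots> = 2 * M * lpnorm p n g * exp (lam * Re z - (Re z - 1) * real (d + 1))"
    proof -
      have "exp (lam * Re z) * exp (- (Re z - 1) * real (d + 1)) = exp (lam * Re z - (Re z - 1) * real (d + 1))"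
        by (metis exp_add diff_conv_add_uminus mult_minus_left)
      then show ?thesis by (simp only: mult_ac)
    qed
    also have "\<dots> \<le> 2 * M * lpnorm p n g * 1"
    proof (rule mult_left_mono)
      have "lam * Re z - (Re z - 1) * real (d + 1) = real (d + 1) * (1 - Re z / 2)" by (simp add: lam field_simps)
      also have "\<dots> \<le> 0" using True by (intro mult_nonneg_nonpos) auto
      finally show "exp (lam * Re z - (Re z - 1) * real (d + 1)) \<le> 1" by simp
    qed (use M in \<open>auto simp: lpnorm_nonneg\<close>)
    also have "\<dots> \<le> 2 * exp (2 * lam) * (M * lpnorm p n g)"
    proof -
      have "1 \<le> exp (2 * lam)" using lam0 by simp
      moreover have "0 \<le> 2 * (M * lpnorm p n g)" using M by (simp add: lpnorm_nonneg)
      ultimately have "1 * (2 * (M * lpnorm p n g)) \<le> exp (2 * lam) * (2 * (M * lpnorm p n g))"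
        by (rule mult_right_mono)
      then show ?thesis by (simp add: algebra_simps)
    qed
    finally show ?thesis .
  next
    case False
    have "lpnorm p n (heat J n z g) \<le> M * lpnorm p n g" using hyp sector_one[OF z(1)] by blast
    moreover have "exp (lam * Re z) \<le> 2 * exp (2 * lam)"
    proof -
      have "lam * Re z \<le> lam * 2" using False lam0 by (intro mult_left_mono) auto
      then have "lam * Re z \<le> 2 * lam" by simp
      then have "exp (lam * Re z) \<le> exp (2 * lam)" by (simp only: exp_le_cancel_iff)
      then show ?thesis using exp_gt_zero[of "2 * lam"] by linarith
    qed
    ultimately show ?thesis by (intro mult_mono) (auto simp: lpnorm_nonneg)
  qed
  have "cmod (Kf lam 1 t z) * L / (cmod (z - of_real t) * (2 * pi)) * lpnorm p n (heat J n z g)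
      \<le> exp (lam * (Re z - t)) * (16 * t\<^sup>2 / (pi * Y\<^sup>2)) * lpnorm p n (heat J n z g)"
    by (rule mult_right_mono[OF W lpnorm_nonneg])
  also have "\<dots> = exp (- lam * t) * (16 * t\<^sup>2 / (pi * Y\<^sup>2)) * (exp (lam * Re z) * lpnorm p n (heat J n z g))"
    by (simp add: exp_diff exp_minus field_simps right_diff_distrib)
  also have "\<dots> \<le> exp (- lam * t) * (16 * t\<^sup>2 / (pi * Y\<^sup>2)) * (2 * exp (2 * lam) * (M * lpnorm p n g))"
    by (rule mult_left_mono[OF key]) (use Ypos in auto)
  also have "\<dots> = M * lpnorm p n g * exp (- lam * t) * (1 / (2 * pi))"
    using t unfolding Y2 by (simp add: field_simps power2_eq_square)
  also have "\<dots> \<le> M * lpnorm p n g * exp (- lam * t) * 1"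
    by (intro mult_left_mono) (use M pi_ge_two in \<open>auto simp: lpnorm_nonneg\<close>)
  finally show ?thesis by simp
qed

lemma case_eq1:
  fixes J :: "'a::banach \<Rightarrow> 'a"
  assumes cs: "complex_structure J" and p: "1 < p" and a: "\<alpha> = 1" and M: "1 \<le> M"
  shows "\<exists>C \<kappa>. 1 \<le> C \<and> 0 < \<kappa> \<and> (\<forall>n (g::nat set \<Rightarrow> 'a) d t.
           (\<forall>z\<in>sector \<alpha>. lpnorm p n (heat J n z g) \<le> M * lpnorm p n g) \<longrightarrow>
           (\<forall>S\<subseteq>{..<n}. card S \<le> d \<longrightarrow> fourier n g S = 0) \<longrightarrow> 0 < t \<longrightarrow> t \<le> Tc \<alpha> M \<longrightarrow>
           lpnorm p n (heat J n (of_real t) g) \<le> C * M * lpnorm p n g * exp (- (\<kappa> * real (d+1)) * t powr (1/\<alpha>)))"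
proof (intro exI conjI allI impI)
  show "1 \<le> (4::real)" by simp
  show "0 < (1/2::real)" by simp
  fix n and g :: "nat set \<Rightarrow> 'a" and d and t :: real
  assume hyp0: "\<forall>z\<in>sector \<alpha>. lpnorm p n (heat J n z g) \<le> M * lpnorm p n g"
    and tail: "\<forall>S\<subseteq>{..<n}. card S \<le> d \<longrightarrow> fourier n g S = 0" and t: "0 < t" "t \<le> Tc \<alpha> M"
  have hyp: "\<forall>z\<in>sector 1. lpnorm p n (heat J n z g) \<le> M * lpnorm p n g" using hyp0 a by simp
  define lam where "lam = real (d + 1) / 2"
  define Y where "Y = 8 * t * exp lam"
  have lam0: "lam \<ge> 0" by (simp add: lam_def)
  have Y: "Y > 0" "t < Y" "8 * t \<le> Y"
  proof -
    have "1 \<le> exp lam" using lam0 by simp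
    then have "8 * t * 1 \<le> 8 * t * exp lam" using t by (intro mult_left_mono) auto
    then show "8 * t \<le> Y" by (simp add: Y_def)
    then show "Y > 0" "t < Y" using t by auto
  qed
  define G where "G = M * lpnorm p n g * exp (- lam * t)"
  have G: "G \<ge> 0" using M by (simp add: G_def lpnorm_nonneg)
  define K where "K = Kf lam 1 t"
  define ca where "ca = Complex 0 (- Y)"
  define cb where "cb = Complex Y 0"
  define cc where "cc = Complex 0 Y"
  have tri: "tri_ok ca cb cc (of_real t)"
    unfolding tri_ok_def ca_def cb_def cc_def using Y t by (simp add: algebra_simps mult_pos_pos)
  have side: "cmod (Wk K t u v s) * lpnorm p n (heat J n (linepath u v s) g) \<le> G"
    if uv: "0 \<le> Re (linepath u v s)" "Y\<^sup>2 / 2 \<le> (cmod (linepath u v s))\<^sup>2" "cmod (v - u) \<le> 2 * Y" for u v s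
  proof -
    have "cmod (Wk K t u v s) * lpnorm p n (heat J n (linepath u v s) g)
        = cmod (Kf lam 1 t (linepath u v s)) * cmod (v - u) / (cmod (linepath u v s - of_real t) * (2 * pi)) * lpnorm p n (heat J n (linepath u v s) g)"
      by (simp add: cmod_Wk K_def)
    also have "\<dots> \<le> M * lpnorm p n g * exp (- lam * t)"
      by (rule side_bound[OF cs p hyp M tail t(1) lam_def Y_def uv(1,2) _ uv(3)]) simp
    finally show ?thesis by (simp add: G_def)
  qed
  have half: "Y\<^sup>2 / 2 \<le> (s * Y)\<^sup>2 + ((1 - s) * Y)\<^sup>2" for s
  proof -
    have "(s * Y)\<^sup>2 + ((1 - s) * Y)\<^sup>2 - Y\<^sup>2 / 2 = 2 * ((s - 1/2) * Y)\<^sup>2"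
      by (simp add: power2_eq_square algebra_simps)
    then show ?thesis by (smt (verit) zero_le_power2)
  qed
  have e1: "cmod (Wk K t ca cb s) * lpnorm p n (heat J n (linepath ca cb s) g) \<le> G" if s: "s \<in> {0..1}" for s
  proof (rule side)
    have lp: "linepath ca cb s = Complex (s * Y) (- ((1 - s) * Y))"
      by (simp add: linepath_def ca_def cb_def complex_eq_iff algebra_simps)
    show "0 \<le> Re (linepath ca cb s)" unfolding lp using s Y by simp
    show "Y\<^sup>2 / 2 \<le> (cmod (linepath ca cb s))\<^sup>2" unfolding lp cmod_power2 using half[of s] by simp
    show "cmod (cb - ca) \<le> 2 * Y" using cmod_le[of "cb - ca"] Y by (simp add: ca_def cb_def)
  qed
  have e2: "cmod (Wk K t cb cc s) * lpnorm p n (heat J n (linepath cb cc s) g) \<le> G" if s: "s \<in> {0..1}" for s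
  proof (rule side)
    have lp: "linepath cb cc s = Complex ((1 - s) * Y) (s * Y)"
      by (simp add: linepath_def cc_def cb_def complex_eq_iff algebra_simps)
    show "0 \<le> Re (linepath cb cc s)" unfolding lp using s Y by simp
    show "Y\<^sup>2 / 2 \<le> (cmod (linepath cb cc s))\<^sup>2" unfolding lp cmod_power2 using half[of s] by simp
    show "cmod (cc - cb) \<le> 2 * Y" using cmod_le[of "cc - cb"] Y by (simp add: cc_def cb_def)
  qed
  define E3 where "E3 s = G * (4 / pi) * (t * Y / (t\<^sup>2 + Y\<^sup>2 * (1 - 2 * s)\<^sup>2))" for s
  have e3: "cmod (Wk K t cc ca s) * lpnorm p n (heat J n (linepath cc ca s) g) \<le> E3 s" if s: "s \<in> {0..1}" for s
  proof -
    define z where "z = linepath cc ca s"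
    have lp: "z = Complex 0 ((1 - 2 * s) * Y)"
      by (simp add: z_def linepath_def cc_def ca_def complex_eq_iff algebra_simps)
    have Rez: "Re z = 0" by (simp add: lp)
    define D where "D = t\<^sup>2 + Y\<^sup>2 * (1 - 2 * s)\<^sup>2"
    have D: "D > 0" using t by (simp add: D_def add_pos_nonneg)
    have zp: "(cmod (z + of_real t))\<^sup>2 = D" by (simp add: lp cmod_power2 D_def power_mult_distrib)
    have zm: "cmod (z - of_real t) \<ge> t" using abs_Re_le_cmod[of "z - of_real t"] Rez t by simp
    have ac: "cmod (ca - cc) = 2 * Y"
    proof -
      have "ca - cc = Complex 0 (- (2 * Y))" by (simp add: ca_def cc_def complex_eq_iff)
      then show ?thesis using Y by (simp add: cmod_def real_sqrt_mult)
    qed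
    have Kz: "cmod (K z) = exp (- lam * t) * (4 * t\<^sup>2 / D)"
    proof -
      have z0: "0 \<le> Re z" using Rez by simp
      show ?thesis unfolding K_def norm_K1[OF t(1) z0] using Rez zp by simp
    qed
    have W: "cmod (Wk K t cc ca s) \<le> exp (- lam * t) * (4 / pi) * (t * Y / D)"
    proof -
      have "cmod (Wk K t cc ca s) = cmod (K z) * (2 * Y) / (cmod (z - of_real t) * (2 * pi))"
        by (simp add: cmod_Wk z_def ac)
      also have "\<dots> \<le> cmod (K z) * (2 * Y) / (t * (2 * pi))"
        by (intro divide_left_mono mult_right_mono zm mult_nonneg_nonneg mult_pos_pos) (use t Y zm in auto)
      also have "\<dots> = exp (- lam * t) * (4 / pi) * (t * Y / D)"
        unfolding Kz using t D by (simp add: field_simps power2_eq_square)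
      finally show ?thesis .
    qed
    have L: "lpnorm p n (heat J n z g) \<le> M * lpnorm p n g" using hyp sector_one[of z] Rez by simp
    have "cmod (Wk K t cc ca s) * lpnorm p n (heat J n z g) \<le> (exp (- lam * t) * (4 / pi) * (t * Y / D)) * (M * lpnorm p n g)"
      by (rule mult_mono[OF W L]) (use t Y D in \<open>auto simp: lpnorm_nonneg\<close>)
    also have "\<dots> = E3 s" by (simp add: E3_def G_def D_def)
    finally show ?thesis by (simp add: z_def)
  qed
  have E3i: "(E3 has_integral (G * (4 / pi) * arctan (Y / t))) {0..1}"
    unfolding E3_def by (rule has_integral_mult_right[OF arctan_int_sym[OF t(1) Y(1)]])
  have Gi: "((\<lambda>s::real. G) has_integral G) {0..1}" using has_integral_const_real[of G 0 1] by simp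
  have beta1: "(0::real) < 1" by simp
  have main: "lpnorm p n (heat J n (of_real t) g) \<le> integral {0..1} (\<lambda>s::real. G) + integral {0..1} (\<lambda>s::real. G) + integral {0..1} E3"
    by (rule contour_bound[OF cs p tri t(1) K_cont[OF beta1 t(1), where lam=lam] K_holo[OF t(1), where lam=lam and beta=1]
          K_one[OF t(1), where lam=lam and beta=1], folded K_def])
       (use e1 e2 e3 Gi E3i in auto)
  have "integral {0..1} E3 \<le> 2 * G"
  proof -
    have "integral {0..1} E3 = G * (4 / pi) * arctan (Y / t)" using E3i by (rule integral_unique)
    also have "\<dots> \<le> G * (4 / pi) * (pi / 2)"
      using arctan_ubound[of "Y / t"] G by (intro mult_left_mono) auto
    finally show ?thesis by simp
  qed
  then have "lpnorm p n (heat J n (of_real t) g) \<le> 4 * G"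
    using main integral_unique[OF Gi] by simp
  also have "\<dots> = 4 * M * lpnorm p n g * exp (- (1 / 2 * real (d + 1)) * t powr (1 / \<alpha>))"
    using t a by (simp add: G_def lam_def)
  finally show "lpnorm p n (heat J n (of_real t) g) \<le> 4 * M * lpnorm p n g * exp (- (1 / 2 * real (d + 1)) * t powr (1 / \<alpha>))" .
qed




lemma key_bound:
  fixes J :: "'a::banach \<Rightarrow> 'a"
  assumes cs: "complex_structure J" and p: "1 < p" and a: "0 < \<alpha>" "\<alpha> \<le> 1" and M: "1 \<le> M"
  shows "\<exists>C \<kappa>. 1 \<le> C \<and> 0 < \<kappa> \<and> (\<forall>n (g::nat set \<Rightarrow> 'a) d t.
           (\<forall>z\<in>sector \<alpha>. lpnorm p n (heat J n z g) \<le> M * lpnorm p n g) \<longrightarrow>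
           (\<forall>S\<subseteq>{..<n}. card S \<le> d \<longrightarrow> fourier n g S = 0) \<longrightarrow> 0 < t \<longrightarrow> t \<le> Tc \<alpha> M \<longrightarrow>
           lpnorm p n (heat J n (of_real t) g) \<le> C * M * lpnorm p n g * exp (- (\<kappa> * real (d+1)) * t powr (1/\<alpha>)))"
proof (cases "\<alpha> < 1")
  case True
  then show ?thesis using case_lt1[OF cs p a(1) True M] by blast
next
  case False
  then have "\<alpha> = 1" using a by simp
  then show ?thesis using case_eq1[OF cs p _ M] by blast
qed

lemma exp_cmp:
  fixes lam \<alpha> t :: real
  assumes lam: "lam > 0" and a: "0 < \<alpha>" "\<alpha> \<le> 1" and t: "t \<ge> 0"
  shows "exp (- lam * t powr (1/\<alpha>)) \<le> exp (1 - t / (lam powr (- \<alpha>)))"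
proof -
  define tau where "tau = lam powr (- \<alpha>)"
  have tau: "tau > 0" using lam by (simp add: tau_def)
  define x where "x = t / tau"
  have x: "x \<ge> 0" using t tau by (simp add: x_def)
  have xb: "x powr (1/\<alpha>) = lam * t powr (1/\<alpha>)"
  proof -
    have "x = t * lam powr \<alpha>" using lam by (simp add: x_def tau_def powr_minus divide_inverse)
    then have "x powr (1/\<alpha>) = t powr (1/\<alpha>) * (lam powr \<alpha>) powr (1/\<alpha>)" using t lam by (simp add: powr_mult)
    also have "(lam powr \<alpha>) powr (1/\<alpha>) = lam" using lam a by (simp add: powr_powr)
    finally show ?thesis by simp
  qed
  have "- (lam * t powr (1/\<alpha>)) \<le> 1 - x"
  proof (cases "x \<le> 1")
    case True
    have "0 \<le> lam * t powr (1/\<alpha>)" using lam by simp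
    then show ?thesis using True by linarith
  next
    case False
    have "x powr 1 \<le> x powr (1/\<alpha>)" using False a by (intro powr_mono) (auto simp: field_simps)
    then show ?thesis using False xb by simp
  qed
  then show ?thesis by (simp add: x_def tau_def)
qed

lemma recon:
  fixes f :: "nat set \<Rightarrow> 'a::real_vector"
  assumes "A \<subseteq> {..<n}"
  shows "f A = (\<Sum>S\<in>Pow {..<n}. (1 - exp (- T * real (card S))) *\<^sub>R (walsh S A *\<^sub>R fourier n f S)) + heat J n (of_real T) f A"
proof -
  have "(\<Sum>S\<in>Pow {..<n}. (1 - exp (- T * real (card S))) *\<^sub>R (walsh S A *\<^sub>R fourier n f S)) + heat J n (of_real T) f A
      = (\<Sum>S\<in>Pow {..<n}. (1 - exp (- T * real (card S))) *\<^sub>R (walsh S A *\<^sub>R fourier n f S) + exp (- T * real (card S)) *\<^sub>R (walsh S A *\<^sub>R fourier n f S))"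
    by (simp add: heat_real sum.distrib)
  also have "\<dots> = (\<Sum>S\<in>Pow {..<n}. walsh S A *\<^sub>R fourier n f S)"
    by (intro sum.cong refl) (simp only: scaleR_add_left[symmetric] diff_add_cancel scaleR_one)
  also have "\<dots> = f A" by (rule fourier_inversion[OF assms])
  finally show ?thesis by simp
qed

lemma heat_int:
  fixes f :: "nat set \<Rightarrow> 'a::real_normed_vector"
  assumes T: "T \<ge> 0"
  shows "((\<lambda>t. heat J n (of_real t) (hDelta n f) A) has_integral
           (\<Sum>S\<in>Pow {..<n}. (1 - exp (- T * real (card S))) *\<^sub>R (walsh S A *\<^sub>R fourier n f S))) {0..T}"
proof -
  have eq: "heat J n (of_real t) (hDelta n f) A = (\<Sum>S\<in>Pow {..<n}. (exp (- t * real (card S)) * real (card S)) *\<^sub>R (walsh S A *\<^sub>R fourier n f S))" for t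
    unfolding heat_real by (intro sum.cong refl) (simp add: fourier_hDelta scaleR_scaleR mult.commute mult.left_commute)
  show ?thesis unfolding eq
    by (intro has_integral_sum has_integral_scaleR_left expk_int T) simp
qed




theorem mainTheorem1:
  fixes J :: "'a::banach \<Rightarrow> 'a" and p \<alpha> :: real
  assumes "complex_structure J"
    and "K_convex TYPE('a)"
    and "1 < p"
    and "0 < \<alpha>" and "\<alpha> \<le> 1"
    and "\<exists>M. \<forall>n\<ge>1. \<forall>z\<in>sector \<alpha>. \<forall>f :: nat set \<Rightarrow> 'a.
            lpnorm p n (heat J n z f) \<le> M * lpnorm p n f"
  shows "\<exists>c>0. \<forall>n d (f :: nat set \<Rightarrow> 'a). d < n \<longrightarrow> tail_space n d f \<longrightarrow>
            lpnorm p n (hDelta n f) \<ge> c * real d powr \<alpha> * lpnorm p n f"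
proof -
  note cs = assms(1) and p = assms(3) and a = assms(4) assms(5)
  obtain M0 where M0: "\<forall>n\<ge>1. \<forall>z\<in>sector \<alpha>. \<forall>f :: nat set \<Rightarrow> 'a. lpnorm p n (heat J n z f) \<le> M0 * lpnorm p n f"
    using assms(6) by blast
  define M where "M = max M0 1"
  have M: "1 \<le> M" by (simp add: M_def)
  have hypM: "lpnorm p n (heat J n z f) \<le> M * lpnorm p n f"
    if "n \<ge> 1" "z \<in> sector \<alpha>" for n z and f :: "nat set \<Rightarrow> 'a"
  proof -
    have "lpnorm p n (heat J n z f) \<le> M0 * lpnorm p n f" using M0 that by blast
    also have "\<dots> \<le> M * lpnorm p n f" by (intro mult_right_mono lpnorm_nonneg) (simp add: M_def)
    finally show ?thesis .
  qed
  obtain C \<kappa> where C: "1 \<le> C" "0 < \<kappa>" and bnd: "\<forall>n (g::nat set \<Rightarrow> 'a) d t.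
           (\<forall>z\<in>sector \<alpha>. lpnorm p n (heat J n z g) \<le> M * lpnorm p n g) \<longrightarrow>
           (\<forall>S\<subseteq>{..<n}. card S \<le> d \<longrightarrow> fourier n g S = 0) \<longrightarrow> 0 < t \<longrightarrow> t \<le> Tc \<alpha> M \<longrightarrow>
           lpnorm p n (heat J n (of_real t) g) \<le> C * M * lpnorm p n g * exp (- (\<kappa> * real (d+1)) * t powr (1/\<alpha>))"
    using key_bound[OF cs p a M] by blast
  define T where "T = Tc \<alpha> M"
  have R1: "R1 \<alpha> \<ge> 1" by (rule R1_ge[OF a])
  have lnM: "ln (4 * M) \<ge> 0" using M by simp
  have T: "T \<ge> R1 \<alpha> + 1" "T - R1 \<alpha> = 1 + ln (4 * M)" "T > 0"
    using R1 lnM by (auto simp: T_def Tc_def)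
  define c where "c = \<kappa> powr \<alpha> / (2 * exp 1 * C * M)"
  have c: "c > 0" using C M by (simp add: c_def)
  show ?thesis
  proof (intro exI[of _ c] conjI allI impI)
    show "c > 0" by (rule c)
    fix n d and f :: "nat set \<Rightarrow> 'a"
    assume dn: "d < n" and tl: "tail_space n d f"
    have n1: "n \<ge> 1" using dn by simp
    have hyp: "\<forall>z\<in>sector \<alpha>. lpnorm p n (heat J n z h) \<le> M * lpnorm p n h" for h :: "nat set \<Rightarrow> 'a"
      using hypM[OF n1] by blast
    define g where "g = hDelta n f"
    have tailf: "\<forall>S\<subseteq>{..<n}. card S \<le> d \<longrightarrow> fourier n f S = 0" using tl by (simp add: tail_space_def)
    have tailg: "\<forall>S\<subseteq>{..<n}. card S \<le> d \<longrightarrow> fourier n g S = 0" using tailf by (simp add: g_def fourier_hDelta)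
    show "c * real d powr \<alpha> * lpnorm p n f \<le> lpnorm p n (hDelta n f)"
    proof (cases "d = 0")
      case True
      then show ?thesis by (simp add: lpnorm_nonneg)
    next
      case False
      then have d1: "real d \<ge> 1" by simp
      define lam where "lam = \<kappa> * real (d + 1)"
      have lam: "lam > 0" using C by (simp add: lam_def)
      define tau where "tau = lam powr (- \<alpha>)"
      have tau: "tau > 0" using lam by (simp add: tau_def)
      define E where "E t = C * M * lpnorm p n g * exp (1 - t / tau)" for t
      define V where "V A = (\<Sum>S\<in>Pow {..<n}. (1 - exp (- T * real (card S))) *\<^sub>R (walsh S A *\<^sub>R fourier n f S))" for A
      have hV: "((\<lambda>t. heat J n (of_real t) g A) has_integral V A) {0..T}" for A
        unfolding g_def V_def by (rule heat_int) (use T in simp)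
      have cont: "continuous_on {0..T} (\<lambda>t. heat J n (of_real t) g A)" for A
        by (rule heat_cont[OF cs]) (intro continuous_intros)
      have nint: "(\<lambda>t. norm (heat J n (of_real t) g A)) integrable_on {0..T}" for A
        by (intro integrable_continuous_interval continuous_intros cont)
      have CMg: "0 \<le> C * M * lpnorm p n g" using C M by (simp add: lpnorm_nonneg)
      have bE: "lpnorm p n (heat J n (of_real t) g) \<le> E t" if t: "t \<in> {0..T}" for t
      proof (cases "t = 0")
        case True
        have "0 \<in> sector \<alpha>" using a by (simp add: sector_def Arg_zero)
        then have "lpnorm p n (heat J n 0 g) \<le> M * lpnorm p n g" using hyp by blast
        also have "\<dots> \<le> C * M * lpnorm p n g * exp 1"
        proof -
          have "M * lpnorm p n g = 1 * (M * lpnorm p n g) * 1" by simp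
          also have "\<dots> \<le> C * (M * lpnorm p n g) * exp 1"
            using C M by (intro mult_mono) (auto simp: lpnorm_nonneg)
          finally show ?thesis by (simp add: mult.assoc)
        qed
        finally show ?thesis using True by (simp add: E_def)
      next
        case False
        then have tp: "0 < t" using t by simp
        have "lpnorm p n (heat J n (of_real t) g) \<le> C * M * lpnorm p n g * exp (- lam * t powr (1/\<alpha>))"
          using bnd hyp[of g] tailg tp t by (auto simp: lam_def T_def)
        also have "\<dots> \<le> C * M * lpnorm p n g * exp (1 - t / tau)"
          unfolding tau_def by (intro mult_left_mono exp_cmp lam a CMg) (use tp in auto)
        finally show ?thesis by (simp add: E_def)
      qed
      have Eint: "(E has_integral (C * M * lpnorm p n g * (tau * exp 1 - tau * exp (1 - T / tau)))) {0..T}"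
        unfolding E_def by (rule has_integral_mult_right[OF exp_int[OF tau]]) (use T in simp)
      have "lpnorm p n V \<le> integral {0..T} E"
        by (rule lpnorm_integral[OF p hV nint bE]) (use Eint in auto)
      also have "\<dots> = C * M * lpnorm p n g * (tau * exp 1 - tau * exp (1 - T / tau))"
        using Eint by (rule integral_unique)
      also have "\<dots> \<le> C * M * lpnorm p n g * (tau * exp 1)"
        by (intro mult_left_mono CMg) (use tau in simp)
      finally have bV: "lpnorm p n V \<le> C * M * lpnorm p n g * (tau * exp 1)" .
      have bT: "lpnorm p n (heat J n (of_real T) f) \<le> lpnorm p n f / 2"
      proof -
        have "lpnorm p n (heat J n (of_real T) f) \<le> 2 * M * lpnorm p n f * exp (- (Re (of_real T) - R1 \<alpha>) * real (d + 1))"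
          by (rule decay[OF cs p a hyp _ tailf]) (use M T in auto)
        also have "exp (- (Re (of_real T) - R1 \<alpha>) * real (d + 1)) \<le> exp (- (1 + ln (4 * M)))"
        proof -
          have "(1 + ln (4 * M)) * 1 \<le> (1 + ln (4 * M)) * real (d + 1)"
            using M by (intro mult_left_mono) auto
          then show ?thesis using T by simp
        qed
        also have "exp (- (1 + ln (4 * M))) \<le> 1 / (4 * M)"
        proof -
          have "exp (- (1 + ln (4 * M))) = exp (-1) / (4 * M)" using M by (simp add: exp_diff exp_minus)
          also have "\<dots> \<le> 1 / (4 * M)" using M by (intro divide_right_mono) auto
          finally show ?thesis .
        qed
        finally have "lpnorm p n (heat J n (of_real T) f) \<le> 2 * M * lpnorm p n f * (1 / (4 * M))"
          using M by (simp add: lpnorm_nonneg mult_left_mono)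
        then show ?thesis using M by simp
      qed
      have "lpnorm p n f = lpnorm p n (\<lambda>A. V A + heat J n (of_real T) f A)"
      proof (rule lpnorm_cong)
        fix A assume A: "A \<in> Pow {..<n}"
        have "f A = V A + heat J n (of_real T) f A"
          unfolding V_def by (rule recon) (use A in auto)
        then show "norm (f A) = norm (V A + heat J n (of_real T) f A)" by (rule arg_cong)
      qed
      also have "\<dots> \<le> lpnorm p n V + lpnorm p n (heat J n (of_real T) f)" by (rule lpnorm_triangle[OF p])
      finally have "lpnorm p n f \<le> C * M * lpnorm p n g * (tau * exp 1) + lpnorm p n f / 2" using bV bT by simp
      then have ff: "lpnorm p n f \<le> 2 * exp 1 * C * M * tau * lpnorm p n g" by (simp add: field_simps)
      have tau_le: "tau \<le> \<kappa> powr (- \<alpha>) * real d powr (- \<alpha>)"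
      proof -
        have "tau \<le> (\<kappa> * real d) powr (- \<alpha>)"
          unfolding tau_def lam_def using a C d1 by (intro powr_mono2') (auto intro: mult_left_mono)
        also have "\<dots> = \<kappa> powr (- \<alpha>) * real d powr (- \<alpha>)" using C d1 by (simp add: powr_mult)
        finally show ?thesis .
      qed
      have k1: "\<kappa> powr \<alpha> * \<kappa> powr (- \<alpha>) = 1" using C by (simp add: powr_add[symmetric])
      have d1': "real d powr \<alpha> * real d powr (- \<alpha>) = 1" using d1 by (simp add: powr_add[symmetric])
      have "c * real d powr \<alpha> * lpnorm p n f \<le> c * real d powr \<alpha> * (2 * exp 1 * C * M * tau * lpnorm p n g)"
        by (intro mult_left_mono ff) (use c in simp)
      also have "\<dots> \<le> c * real d powr \<alpha> * (2 * exp 1 * C * M * (\<kappa> powr (- \<alpha>) * real d powr (- \<alpha>)) * lpnorm p n g)"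
        by (intro mult_left_mono mult_right_mono tau_le lpnorm_nonneg) (use c C M in auto)
      also have "\<dots> = (c * (2 * exp 1 * C * M)) * (\<kappa> powr (- \<alpha>)) * (real d powr \<alpha> * real d powr (- \<alpha>)) * lpnorm p n g"
        by (simp add: algebra_simps)
      also have "c * (2 * exp 1 * C * M) = \<kappa> powr \<alpha>" using C M by (simp add: c_def)
      also have "\<kappa> powr \<alpha> * \<kappa> powr (- \<alpha>) * (real d powr \<alpha> * real d powr (- \<alpha>)) * lpnorm p n g = lpnorm p n g"
        using k1 d1' by simp
      finally show ?thesis by (simp add: g_def)
    qed
  qed
qed


end
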